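(* Assume the standing hypotheses of the context and let $\varepsilon\in(0,\varepsilon_0]$. Let $\bar{\boldsymbol\rho}=(\bar\rho_1,\bar\rho_2)\in\mathfrak X_0$ be any global minimizer of $\mathcal E_\varepsilon$ over $\mathcal P_2(\mathbb R^d)^2$. Then there are constants $C_1,C_2>0$ such that on $\mathbb R^d$ \[F_1'(\bar\rho_1)+\varepsilon\partial_{r_1}h(\bar\rho_1,\bar\rho_2)=(C_1-K*\bar\rho_2)_+,\qquad F_2'(\bar\rho_2)+\varepsilon\partial_{r_2}h(\bar\rho_1,\bar\rho_2)=(C_2-K*\bar\rho_1)_+ ,\] and the supports of $\bar\rho_1,\bar\rho_2$ are the compact convex sets \[\mathrm{supp}\,\bar\rho_1=\{K*\bar\rho_2\le C_1\},\qquad \mathrm{supp}\,\bar\rho_2=\{K*\bar\rho_1\le C_2\}.\]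
   Context: Let $d\ge1$. Standing hypotheses. (K): $K:\mathbb R^d\to[0,\infty)$ radially symmetric, $K(0)=0$, $K\in C^2$, $\nabla^2K\ge\lambda\,\mathrm{Id}$ for some $\lambda>0$, $\|\nabla^2K\|\le C_K$. (F): for $j=1,2$, $F_j:[0,\infty)\to[0,\infty)$ is $C^2$, $F_j''>0$ on $(0,\infty)$, $F_j(0)=F_j'(0)=0$, $\liminf_{r\to\infty}F_j''(r)>0$, $\limsup_{r\to\infty}F_j'(r)/F_j(r)<\infty$; there are $m_j,M_j>0,\beta_j\ge0,r_0>0$ with $m_jr^{\beta_j}\le F_j''(r)\le M_jr^{\beta_j}$ on $[0,r_0]$; $F_j(r)-rF_j'(r)+r^2F_j''(r)\ge0$. (h): $h:[0,\infty)^2\to\mathbb R$ is $C^2$, $h$ and $\nabla h$ vanish on $\{r_1=0\}\cup\{r_2=0\}$. ($\theta$): with $\theta_{j,i}(\mathbf u)=\partial_{r_i}\partial_{r_j}h(\mathbf r)/F_i''(r_i)$, $r_k=(F_k')^{-1}(u_k)$, each $\theta_{j,i}$ is locally Lipschitz on $[0,\infty)^2$ and $|\theta_{j,i}(\mathbf u)|\le\kappa_{j,i}\min\{1,u_1,u_2,\sqrt{(F_i')^{-1}(u_i)/(F_j')^{-1}(u_j)}\}$ for constants $\kappa_{j,i}>0$. Notation: $\mathcal P_2(\mathbb R^d)$ probability measures with finite second moment (absolutely continuous ones identified with densities); $\mathfrak m_1[\rho]=\int x\rho$; $\mathfrak X_0=\{\boldsymbol\rho\in\mathcal P_2(\mathbb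 R^d)^2:\mathfrak m_1[\rho_1]+\mathfrak m_1[\rho_2]=0\}$; $\mathcal E_\varepsilon(\boldsymbol\rho)=\int[F_1(\rho_1)+F_2(\rho_2)+\varepsilon h(\rho_1,\rho_2)+\rho_1K*\rho_2]dx$, $=+\infty$ unless both components are absolutely continuous with integrand in $L^1$. $\varepsilon_0>0$ is a number such that $\mathbf r\mapsto F_1(r_1)+F_2(r_2)+2\varepsilon_0h(\mathbf r)$ is convex on $[0,\infty)^2$. *)

theory Defs
  imports "HOL-Analysis.Analysis"
begin

text \<open>Conventional power r^b for r \<ge> 0 with 0^0 = 1 (Isabelle's powr has 0 powr b = 0).\<close>
definition pow0 :: "real \<Rightarrow> real \<Rightarrow> real" where
  "pow0 r b = (if r = 0 then (if b = 0 then 1 else 0) else r powr b)"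

definition quadrant :: "(real \<times> real) set" where
  "quadrant = {0..} \<times> {0..}"

definition locally_lipschitz_on :: "('a::metric_space) set \<Rightarrow> ('a \<Rightarrow> 'b::metric_space) \<Rightarrow> bool" where
  "locally_lipschitz_on S f \<longleftrightarrow>
     (\<forall>x\<in>S. \<exists>e>0. \<exists>L. L-lipschitz_on (cball x e \<inter> S) f)"

definition K_hyp :: "('a::euclidean_space \<Rightarrow> real) \<Rightarrow> bool" where
  "K_hyp K \<longleftrightarrow>
     (\<forall>x. 0 \<le> K x) \<and> (\<forall>x y. norm x = norm y \<longrightarrow> K x = K y) \<and> K 0 = 0 \<and>
     (\<exists>DK H lam CK. lam > 0 \<and>
        (\<forall>x. (K has_derivative (\<lambda>v. DK x \<bullet> v)) (at x)) \<and>
        (\<forall>x. (DK has_derivative blinfun_apply (H x)) (at x)) \<and>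
        continuous_on UNIV (H :: 'a \<Rightarrow> 'a \<Rightarrow>\<^sub>L 'a) \<and>
        (\<forall>x v. lam * (norm v)\<^sup>2 \<le> v \<bullet> blinfun_apply (H x) v) \<and>
        (\<forall>x. norm (H x) \<le> CK))"

definition F_hyp :: "(real \<Rightarrow> real) \<Rightarrow> (real \<Rightarrow> real) \<Rightarrow> (real \<Rightarrow> real) \<Rightarrow> bool" where
  "F_hyp F F' F'' \<longleftrightarrow>
     (\<forall>r\<ge>0. 0 \<le> F r) \<and>
     (\<forall>r\<ge>0. (F has_real_derivative F' r) (at r within {0..}) \<and>
             (F' has_real_derivative F'' r) (at r within {0..})) \<and>
     continuous_on {0..} F'' \<and>
     (\<forall>r>0. 0 < F'' r) \<and> F 0 = 0 \<and> F' 0 = 0 \<and>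
     Liminf at_top (\<lambda>r. ereal (F'' r)) > 0 \<and>
     Limsup at_top (\<lambda>r. ereal (F' r / F r)) < \<infinity> \<and>
     (\<exists>m M \<beta> r0. m > 0 \<and> M > 0 \<and> \<beta> \<ge> 0 \<and> r0 > 0 \<and>
        (\<forall>r\<in>{0..r0}. m * pow0 r \<beta> \<le> F'' r \<and> F'' r \<le> M * pow0 r \<beta>)) \<and>
     (\<forall>r\<ge>0. 0 \<le> F r - r * F' r + r\<^sup>2 * F'' r)"

definition h_hyp :: "(real \<times> real \<Rightarrow> real) \<Rightarrow> (real \<times> real \<Rightarrow> real) \<Rightarrow> (real \<times> real \<Rightarrow> real) \<Rightarrow>
    (real \<times> real \<Rightarrow> real) \<Rightarrow> (real \<times> real \<Rightarrow> real) \<Rightarrow> (real \<times> real \<Rightarrow> real) \<Rightarrow> (real \<times> real \<Rightarrow> real) \<Rightarrow> bool" where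
  "h_hyp h h1 h2 h11 h12 h21 h22 \<longleftrightarrow>
     (\<forall>r\<in>quadrant.
        (h has_derivative (\<lambda>(a,b). h1 r * a + h2 r * b)) (at r within quadrant) \<and>
        (h1 has_derivative (\<lambda>(a,b). h11 r * a + h12 r * b)) (at r within quadrant) \<and>
        (h2 has_derivative (\<lambda>(a,b). h21 r * a + h22 r * b)) (at r within quadrant)) \<and>
     continuous_on quadrant h11 \<and> continuous_on quadrant h12 \<and>
     continuous_on quadrant h21 \<and> continuous_on quadrant h22 \<and>
     (\<forall>r\<in>quadrant. (fst r = 0 \<or> snd r = 0) \<longrightarrow> h r = 0 \<and> h1 r = 0 \<and> h2 r = 0)"

definition Finv :: "(real \<Rightarrow> real) \<Rightarrow> real \<Rightarrow> real" where
  "Finv F' = the_inv_into {0..} F'"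

text \<open>Hypothesis (theta) for one pair (j,i): hji = d_{r_i} d_{r_j} h, Fi'' = F_i'',
  seli/selj select the i-th/j-th component of r = (r1,r2).\<close>
definition theta :: "(real \<times> real \<Rightarrow> real) \<Rightarrow> (real \<Rightarrow> real) \<Rightarrow> (real \<times> real \<Rightarrow> real) \<Rightarrow>
    (real \<Rightarrow> real) \<Rightarrow> (real \<Rightarrow> real) \<Rightarrow> real \<times> real \<Rightarrow> real" where
  "theta hji Fi'' seli F1' F2' u =
     (let r = (Finv F1' (fst u), Finv F2' (snd u)) in hji r / Fi'' (seli r))"

definition theta_hyp :: "(real \<times> real \<Rightarrow> real) \<Rightarrow> (real \<Rightarrow> real) \<Rightarrow> (real \<times> real \<Rightarrow> real) \<Rightarrow>
    (real \<times> real \<Rightarrow> real) \<Rightarrow> (real \<Rightarrow> real) \<Rightarrow> (real \<Rightarrow> real) \<Rightarrow> bool" where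
  "theta_hyp hji Fi'' seli selj F1' F2' \<longleftrightarrow>
     locally_lipschitz_on quadrant (theta hji Fi'' seli F1' F2') \<and>
     (\<exists>\<kappa>>0. \<forall>u\<in>quadrant.
        (let r = (Finv F1' (fst u), Finv F2' (snd u)) in
          \<bar>theta hji Fi'' seli F1' F2' u\<bar>
            \<le> \<kappa> * min 1 (min (fst u) (min (snd u) (sqrt (seli r / selj r))))))"

text \<open>Absolutely continuous elements of P_2(R^d), identified with their densities.\<close>
definition P2dens :: "('a::euclidean_space \<Rightarrow> real) \<Rightarrow> bool" where
  "P2dens \<rho> \<longleftrightarrow> \<rho> \<in> borel_measurable lborel \<and> (\<forall>x. 0 \<le> \<rho> x) \<and>
     integrable lborel \<rho> \<and> integral\<^sup>L lborel \<rho> = 1 \<and>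
     integrable lborel (\<lambda>x. (norm x)\<^sup>2 * \<rho> x)"

definition moment1 :: "('a::euclidean_space \<Rightarrow> real) \<Rightarrow> 'a" where
  "moment1 \<rho> = integral\<^sup>L lborel (\<lambda>x. \<rho> x *\<^sub>R x)"

definition X0 :: "('a::euclidean_space \<Rightarrow> real) \<Rightarrow> ('a \<Rightarrow> real) \<Rightarrow> bool" where
  "X0 \<rho>1 \<rho>2 \<longleftrightarrow> P2dens \<rho>1 \<and> P2dens \<rho>2 \<and> moment1 \<rho>1 + moment1 \<rho>2 = 0"

definition conv :: "('a::euclidean_space \<Rightarrow> real) \<Rightarrow> ('a \<Rightarrow> real) \<Rightarrow> 'a \<Rightarrow> real" where
  "conv K \<rho> x = (LINT y|lborel. K (x - y) * \<rho> y)"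

text \<open>The energy E_eps on pairs of densities (+oo if the integrand is not in L^1).
  Pairs of measures not both absolutely continuous have energy +oo by definition.\<close>
definition energy :: "(real \<Rightarrow> real) \<Rightarrow> (real \<Rightarrow> real) \<Rightarrow> (real \<times> real \<Rightarrow> real) \<Rightarrow>
    ('a::euclidean_space \<Rightarrow> real) \<Rightarrow> real \<Rightarrow> ('a \<Rightarrow> real) \<Rightarrow> ('a \<Rightarrow> real) \<Rightarrow> ereal" where
  "energy F1 F2 h K \<epsilon> \<rho>1 \<rho>2 =
     (let f = (\<lambda>x. F1 (\<rho>1 x) + F2 (\<rho>2 x) + \<epsilon> * h (\<rho>1 x, \<rho>2 x) + \<rho>1 x * conv K \<rho>2 x)
      in if integrable lborel f then ereal (integral\<^sup>L lborel f) else \<infinity>)"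

definition dsupp :: "('a::euclidean_space \<Rightarrow> real) \<Rightarrow> 'a set" where
  "dsupp \<rho> = {x. \<forall>e>0. 0 < emeasure (density lborel (\<lambda>y. ennreal (\<rho> y))) (ball x e)}"

end

theory Submission
  imports Defs
begin

lemma K_props:
  fixes K :: "'a::euclidean_space \<Rightarrow> real"
  assumes "K_hyp K"
  obtains lam CK where "lam > 0" "CK \<ge> 0" "convex_on UNIV K" "\<And>z. K (-z) = K z" "\<And>z. 0 \<le> K z"
    "\<And>z. lam / 2 * (norm z)\<^sup>2 \<le> K z" "\<And>z. K z \<le> CK / 2 * (norm z)\<^sup>2" "continuous_on UNIV K"
proof -
  from assms obtain DK H lam CK where lam: "lam > 0"
    and dK: "\<And>x. (K has_derivative (\<lambda>v. DK x \<bullet> v)) (at x)"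
    and dDK: "\<And>x. (DK has_derivative blinfun_apply (H x)) (at x)"
    and pos: "\<And>x v. lam * (norm v)\<^sup>2 \<le> v \<bullet> blinfun_apply (H x) v"
    and bd: "\<And>x. norm (H x) \<le> CK"
    and K0: "K 0 = 0" and Kn: "\<And>x. 0 \<le> K x" and Kr: "\<And>x y. norm x = norm y \<Longrightarrow> K x = K y"
    unfolding K_hyp_def by blast
  have CK: "CK \<ge> 0" using bd[of 0] norm_ge_zero order_trans by blast
  have d1: "((\<lambda>t. K (x + t *\<^sub>R v)) has_real_derivative (DK (x + t *\<^sub>R v) \<bullet> v)) (at t)" for x v t
  proof -
    have "((\<lambda>t. x + t *\<^sub>R v) has_derivative (\<lambda>s. s *\<^sub>R v)) (at t)"
      by (auto intro!: derivative_eq_intros)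
    from has_derivative_compose[OF this dK]
    show ?thesis unfolding has_field_derivative_def
      by (rule has_derivative_eq_rhs) (auto simp: fun_eq_iff inner_commute)
  qed
  have d2: "((\<lambda>t. DK (x + t *\<^sub>R v) \<bullet> v) has_real_derivative (v \<bullet> blinfun_apply (H (x + t *\<^sub>R v)) v)) (at t)" for x v t
  proof -
    have "((\<lambda>t. x + t *\<^sub>R v) has_derivative (\<lambda>s. s *\<^sub>R v)) (at t)"
      by (auto intro!: derivative_eq_intros)
    from has_derivative_compose[OF this dDK]
    have "((\<lambda>t. DK (x + t *\<^sub>R v)) has_derivative (\<lambda>s. blinfun_apply (H (x + t *\<^sub>R v)) (s *\<^sub>R v))) (at t)" by (simp add: o_def)
    from has_derivative_inner_left[OF this, of v]
    show ?thesis unfolding has_field_derivative_def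
      by (rule has_derivative_eq_rhs) (auto simp: fun_eq_iff inner_commute blinfun.scaleR_right)
  qed
  have Hbd: "v \<bullet> blinfun_apply (H x) v \<le> CK * (norm v)\<^sup>2" for x v
  proof -
    have "v \<bullet> blinfun_apply (H x) v \<le> norm v * norm (blinfun_apply (H x) v)" by (rule norm_cauchy_schwarz)
    also have "\<dots> \<le> norm v * (norm (H x) * norm v)" by (simp add: mult_left_mono norm_blinfun)
    also have "\<dots> \<le> norm v * (CK * norm v)" by (simp add: bd mult_left_mono mult_right_mono)
    finally show ?thesis by (simp add: power2_eq_square mult_ac)
  qed
  have mono1: "DK (x + s *\<^sub>R v) \<bullet> v \<le> DK (x + t *\<^sub>R v) \<bullet> v" if "s \<le> t" for x v s t
    using that
  proof (rule DERIV_nonneg_imp_nondecreasing)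
    fix y show "\<exists>l. ((\<lambda>t. DK (x + t *\<^sub>R v) \<bullet> v) has_real_derivative l) (at y) \<and> l \<ge> 0"
    proof (intro exI conjI)
      show "((\<lambda>t. DK (x + t *\<^sub>R v) \<bullet> v) has_real_derivative (v \<bullet> blinfun_apply (H (x + y *\<^sub>R v)) v)) (at y)"
        by (rule d2)
      have "0 \<le> lam * (norm v)\<^sup>2" using lam by simp
      then show "0 \<le> v \<bullet> blinfun_apply (H (x + y *\<^sub>R v)) v" using pos by (rule order_trans)
    qed
  qed
  have convK: "convex_on UNIV K"
  proof (rule convex_onI)
    fix t :: real and x y :: 'a assume t: "0 < t" "t < 1"
    have "convex_on UNIV (\<lambda>t. K (x + t *\<^sub>R (y - x)))"
      by (rule convex_on_realI[OF _ d1 mono1]) auto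
    from convex_onD[OF this, of t 0 1]
    have "K (x + ((1-t) *\<^sub>R 0 + t *\<^sub>R 1) *\<^sub>R (y - x)) \<le> (1-t) * K (x + 0 *\<^sub>R (y - x)) + t * K (x + 1 *\<^sub>R (y - x))"
      using t by simp
    moreover have "x + ((1-t) * 0 + t * 1) *\<^sub>R (y - x) = (1 - t) *\<^sub>R x + t *\<^sub>R y" by (simp add: algebra_simps)
    ultimately show "K ((1 - t) *\<^sub>R x + t *\<^sub>R y) \<le> (1 - t) * K x + t * K y" by simp
  qed simp
  have DK0: "DK 0 \<bullet> z = 0" for z
  proof -
    have "((\<lambda>t. K (0 + t *\<^sub>R z)) has_real_derivative (DK (0 + 0 *\<^sub>R z) \<bullet> z)) (at 0)" by (rule d1)
    from DERIV_local_min[OF this, of 1] show ?thesis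
      by (simp add: K0 Kn)
  qed
  have lower: "lam / 2 * (norm z)\<^sup>2 \<le> K z" for z
  proof -
    let ?c = "lam * (norm z)\<^sup>2"
    have a: "0 \<le> DK (0 + t *\<^sub>R z) \<bullet> z - ?c * t" if "0 \<le> t" for t
    proof -
      have "(\<lambda>t. DK (0 + t *\<^sub>R z) \<bullet> z - ?c * t) 0 \<le> (\<lambda>t. DK (0 + t *\<^sub>R z) \<bullet> z - ?c * t) t"
        using that
      proof (rule DERIV_nonneg_imp_nondecreasing[where f="\<lambda>t. DK (0 + t *\<^sub>R z) \<bullet> z - ?c * t"])
        fix y
        have "((\<lambda>t. DK (0 + t *\<^sub>R z) \<bullet> z - ?c * t) has_real_derivative (z \<bullet> blinfun_apply (H (0 + y *\<^sub>R z)) z - ?c * 1)) (at y)"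
          by (intro DERIV_diff d2 DERIV_cmult DERIV_ident)
        then show "\<exists>l. ((\<lambda>t. DK (0 + t *\<^sub>R z) \<bullet> z - ?c * t) has_real_derivative l) (at y) \<and> l \<ge> 0"
          using pos[of z "0 + y *\<^sub>R z"] by (intro exI[of _ "z \<bullet> blinfun_apply (H (0 + y *\<^sub>R z)) z - lam * (norm z)\<^sup>2 * 1"]) simp
      qed
      then show ?thesis using DK0 by simp
    qed
    have "(\<lambda>t. K (0 + t *\<^sub>R z) - ?c / 2 * t\<^sup>2) 0 \<le> (\<lambda>t. K (0 + t *\<^sub>R z) - ?c / 2 * t\<^sup>2) 1"
    proof (rule DERIV_nonneg_imp_nondecreasing[where f="\<lambda>t. K (0 + t *\<^sub>R z) - ?c / 2 * t\<^sup>2"])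
      fix y :: real assume "0 \<le> y"
      then show "\<exists>l. ((\<lambda>t. K (0 + t *\<^sub>R z) - ?c / 2 * t\<^sup>2) has_real_derivative l) (at y) \<and> l \<ge> 0"
      proof -
        have "((\<lambda>t. K (0 + t *\<^sub>R z) - ?c / 2 * t\<^sup>2) has_real_derivative (DK (0 + y *\<^sub>R z) \<bullet> z - ?c / 2 * (2 * y))) (at y)"
          by (intro DERIV_diff d1 DERIV_cmult) (auto intro!: derivative_eq_intros)
        then show ?thesis using a[of y] \<open>0 \<le> y\<close> by force
      qed
    qed simp
    then show ?thesis by (simp add: K0)
  qed
  have upper: "K z \<le> CK / 2 * (norm z)\<^sup>2" for z
  proof -
    let ?c = "CK * (norm z)\<^sup>2"
    have a: "0 \<le> ?c * t - DK (0 + t *\<^sub>R z) \<bullet> z" if "0 \<le> t" for t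
    proof -
      have "(\<lambda>t. ?c * t - DK (0 + t *\<^sub>R z) \<bullet> z) 0 \<le> (\<lambda>t. ?c * t - DK (0 + t *\<^sub>R z) \<bullet> z) t"
        using that
      proof (rule DERIV_nonneg_imp_nondecreasing[where f="\<lambda>t. ?c * t - DK (0 + t *\<^sub>R z) \<bullet> z"])
        fix y
        have "((\<lambda>t. ?c * t - DK (0 + t *\<^sub>R z) \<bullet> z) has_real_derivative (?c * 1 - z \<bullet> blinfun_apply (H (0 + y *\<^sub>R z)) z)) (at y)"
          by (intro DERIV_diff d2 DERIV_cmult DERIV_ident)
        then show "\<exists>l. ((\<lambda>t. ?c * t - DK (0 + t *\<^sub>R z) \<bullet> z) has_real_derivative l) (at y) \<and> l \<ge> 0"
          using Hbd[of z "0 + y *\<^sub>R z"] by (intro exI[of _ "CK * (norm z)\<^sup>2 * 1 - z \<bullet> blinfun_apply (H (0 + y *\<^sub>R z)) z"]) simp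
      qed
      then show ?thesis using DK0 by simp
    qed
    have "(\<lambda>t. ?c / 2 * t\<^sup>2 - K (0 + t *\<^sub>R z)) 0 \<le> (\<lambda>t. ?c / 2 * t\<^sup>2 - K (0 + t *\<^sub>R z)) 1"
    proof (rule DERIV_nonneg_imp_nondecreasing[where f="\<lambda>t. ?c / 2 * t\<^sup>2 - K (0 + t *\<^sub>R z)"])
      fix y :: real assume "0 \<le> y"
      then show "\<exists>l. ((\<lambda>t. ?c / 2 * t\<^sup>2 - K (0 + t *\<^sub>R z)) has_real_derivative l) (at y) \<and> l \<ge> 0"
      proof -
        have "((\<lambda>t. ?c / 2 * t\<^sup>2 - K (0 + t *\<^sub>R z)) has_real_derivative (?c / 2 * (2 * y) - DK (0 + y *\<^sub>R z) \<bullet> z)) (at y)"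
          by (intro DERIV_diff d1 DERIV_cmult) (auto intro!: derivative_eq_intros)
        then show ?thesis using a[of y] \<open>0 \<le> y\<close> by force
      qed
    qed simp
    then show ?thesis by (simp add: K0)
  qed
  have cont: "continuous_on UNIV K"
    using dK by (meson continuous_at_imp_continuous_on has_derivative_continuous)
  show ?thesis
    using that[OF lam CK convK _ Kn lower upper cont] Kr[of "-z" z for z] by simp
qed

lemma norm_diff_sq_le: "(norm (x - y :: 'a::real_normed_vector))\<^sup>2 \<le> 2 * (norm x)\<^sup>2 + 2 * (norm y)\<^sup>2"
proof -
  have "norm (x - y) \<le> norm x + norm y" by (rule norm_triangle_ineq4)
  then have "(norm (x - y))\<^sup>2 \<le> (norm x + norm y)\<^sup>2" by (simp add: power_mono)
  also have "\<dots> \<le> 2 * (norm x)\<^sup>2 + 2 * (norm y)\<^sup>2" using power2_sum[of "norm x" "norm y"] power2_diff[of "norm x" "norm y"] zero_le_power2[of "norm x - norm y"] by linarith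
  finally show ?thesis .
qed

lemma norm_sq_le_diff: "(norm (x :: 'a::real_normed_vector))\<^sup>2 \<le> 2 * (norm (x - y))\<^sup>2 + 2 * (norm y)\<^sup>2"
  using norm_diff_sq_le[of "x - y" "-y"] by simp

lemma P2dens_parts:
  assumes "P2dens \<rho>"
  shows "\<rho> \<in> borel_measurable lborel" "\<And>x. 0 \<le> \<rho> x" "integrable lborel \<rho>" "integral\<^sup>L lborel \<rho> = 1"
    "integrable lborel (\<lambda>x. (norm x)\<^sup>2 * \<rho> x)"
  using assms unfolding P2dens_def by auto

lemma conv_integrable:
  fixes K :: "'a::euclidean_space \<Rightarrow> real"
  assumes Kc: "continuous_on UNIV K" and Kn: "\<And>z. 0 \<le> K z" and Ku: "\<And>z. K z \<le> CK / 2 * (norm z)\<^sup>2"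
    and P: "P2dens \<rho>" and CK: "0 \<le> CK"
  shows "integrable lborel (\<lambda>y. K (x - y) * \<rho> y)"
proof (rule Bochner_Integration.integrable_bound[where f="\<lambda>y. CK * (norm x)\<^sup>2 * \<rho> y + CK * ((norm y)\<^sup>2 * \<rho> y)"])
  note p = P2dens_parts[OF P]
  show "integrable lborel (\<lambda>y. CK * (norm x)\<^sup>2 * \<rho> y + CK * ((norm y)\<^sup>2 * \<rho> y))"
    by (intro Bochner_Integration.integrable_add integrable_mult_right) (auto simp: p)
  show "(\<lambda>y. K (x - y) * \<rho> y) \<in> borel_measurable lborel"
    using p(1) Kc by (intro borel_measurable_times borel_measurable_continuous_on[where f=K]) auto
  show "AE y in lborel. norm (K (x - y) * \<rho> y) \<le> norm (CK * (norm x)\<^sup>2 * \<rho> y + CK * ((norm y)\<^sup>2 * \<rho> y))"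
  proof (intro AE_I2)
    fix y
    have "K (x - y) \<le> CK / 2 * (2 * (norm x)\<^sup>2 + 2 * (norm y)\<^sup>2)"
      using Ku[of "x - y"] mult_left_mono[OF norm_diff_sq_le[of x y], of "CK / 2"] CK by simp
    then have "K (x - y) * \<rho> y \<le> (CK * (norm x)\<^sup>2 + CK * (norm y)\<^sup>2) * \<rho> y"
      using p(2)[of y] by (intro mult_right_mono) (auto simp: algebra_simps)
    then show "norm (K (x - y) * \<rho> y) \<le> norm (CK * (norm x)\<^sup>2 * \<rho> y + CK * ((norm y)\<^sup>2 * \<rho> y))"
      using Kn[of "x - y"] p(2)[of y] CK by (simp add: algebra_simps)
  qed
qed

lemma conv_props:
  fixes K :: "'a::euclidean_space \<Rightarrow> real"
  assumes Kc: "continuous_on UNIV K" and Kn: "\<And>z. 0 \<le> K z" and Ku: "\<And>z. K z \<le> CK / 2 * (norm z)\<^sup>2"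
    and Kl: "\<And>z. lam / 2 * (norm z)\<^sup>2 \<le> K z" and lam: "lam > 0" and Kcv: "convex_on UNIV K"
    and P: "P2dens \<rho>" and CK: "0 \<le> CK"
  shows "convex_on UNIV (conv K \<rho>)" "continuous_on UNIV (conv K \<rho>)" "\<And>x. 0 \<le> conv K \<rho> x"
    "\<And>C. bounded {x. conv K \<rho> x \<le> C}"
proof -
  note p = P2dens_parts[OF P]
  note I = conv_integrable[OF Kc Kn Ku P CK]
  show cv: "convex_on UNIV (conv K \<rho>)"
  proof (rule convex_onI)
    fix t :: real and x y :: 'a assume t: "0 < t" "t < 1"
    have "conv K \<rho> ((1 - t) *\<^sub>R x + t *\<^sub>R y) = (LINT z|lborel. K ((1 - t) *\<^sub>R (x - z) + t *\<^sub>R (y - z)) * \<rho> z)"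
      unfolding conv_def by (simp add: algebra_simps)
    also have "\<dots> \<le> (LINT z|lborel. ((1 - t) * K (x - z) + t * K (y - z)) * \<rho> z)"
    proof (rule integral_mono)
      show "integrable lborel (\<lambda>z. K ((1 - t) *\<^sub>R (x - z) + t *\<^sub>R (y - z)) * \<rho> z)"
        using I[of "(1 - t) *\<^sub>R x + t *\<^sub>R y"] by (simp add: algebra_simps)
      show "integrable lborel (\<lambda>z. ((1 - t) * K (x - z) + t * K (y - z)) * \<rho> z)"
        using I[of x] I[of y] by (simp add: algebra_simps)
      fix z
      have "K ((1 - t) *\<^sub>R (x - z) + t *\<^sub>R (y - z)) \<le> (1 - t) * K (x - z) + t * K (y - z)"
        using t by (intro convex_onD[OF Kcv]) auto
      then show "K ((1 - t) *\<^sub>R (x - z) + t *\<^sub>R (y - z)) * \<rho> z \<le> ((1 - t) * K (x - z) + t * K (y - z)) * \<rho> z"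
        using p(2)[of z] by (rule mult_right_mono)
    qed
    also have "\<dots> = (1 - t) * conv K \<rho> x + t * conv K \<rho> y"
    proof -
      have e: "(\<lambda>z. ((1 - t) * K (x - z) + t * K (y - z)) * \<rho> z) = (\<lambda>z. (1 - t) * (K (x - z) * \<rho> z) + t * (K (y - z) * \<rho> z))"
        by (simp add: fun_eq_iff algebra_simps)
      show ?thesis unfolding conv_def e
        using I[of x] I[of y] by (simp add: integral_add integral_mult_right_zero)
    qed
    finally show "conv K \<rho> ((1 - t) *\<^sub>R x + t *\<^sub>R y) \<le> (1 - t) * conv K \<rho> x + t * conv K \<rho> y" .
  qed simp
  show "continuous_on UNIV (conv K \<rho>)" by (rule convex_on_continuous[OF open_UNIV cv])
  show nn: "0 \<le> conv K \<rho> x" for x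
    unfolding conv_def using Kn p(2) by (intro integral_nonneg_AE) (auto intro!: mult_nonneg_nonneg)
  define m2 where "m2 = (LINT y|lborel. (norm y)\<^sup>2 * \<rho> y)"
  have low: "lam / 4 * (norm x)\<^sup>2 - lam / 2 * m2 \<le> conv K \<rho> x" for x
  proof -
    have "lam / 4 * (norm x)\<^sup>2 - lam / 2 * m2 = (LINT y|lborel. (lam / 4 * (norm x)\<^sup>2 - lam / 2 * (norm y)\<^sup>2) * \<rho> y)"
    proof -
      have e: "(\<lambda>y. (lam / 4 * (norm x)\<^sup>2 - lam / 2 * (norm y)\<^sup>2) * \<rho> y) = (\<lambda>y. (lam / 4 * (norm x)\<^sup>2) * \<rho> y - (lam / 2) * ((norm y)\<^sup>2 * \<rho> y))"
        by (simp add: fun_eq_iff algebra_simps)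
      show ?thesis unfolding m2_def e using p by (simp add: integral_diff)
    qed
    also have "\<dots> \<le> conv K \<rho> x" unfolding conv_def
    proof (rule integral_mono)
      show "integrable lborel (\<lambda>y. (lam / 4 * (norm x)\<^sup>2 - lam / 2 * (norm y)\<^sup>2) * \<rho> y)"
        using p by (simp add: algebra_simps)
      show "integrable lborel (\<lambda>y. K (x - y) * \<rho> y)" by (rule I)
      fix y
      have "lam / 4 * (norm x)\<^sup>2 - lam / 2 * (norm y)\<^sup>2 \<le> lam / 2 * (norm (x - y))\<^sup>2"
        using mult_left_mono[OF norm_sq_le_diff[of x y], of "lam / 4"] lam by (simp add: algebra_simps)
      also have "\<dots> \<le> K (x - y)" by (rule Kl)
      finally show "(lam / 4 * (norm x)\<^sup>2 - lam / 2 * (norm y)\<^sup>2) * \<rho> y \<le> K (x - y) * \<rho> y"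
        using p(2)[of y] by (rule mult_right_mono)
    qed
    finally show ?thesis .
  qed
  show "bounded {x. conv K \<rho> x \<le> C}" for C
  proof -
    have "norm x \<le> sqrt (4 / lam * (C + lam / 2 * m2))" if "conv K \<rho> x \<le> C" for x
    proof -
      have "lam / 4 * (norm x)\<^sup>2 \<le> C + lam / 2 * m2" using low[of x] that by simp
      then have "(norm x)\<^sup>2 \<le> 4 / lam * (C + lam / 2 * m2)" using lam by (simp add: field_simps)
      then show ?thesis using real_le_rsqrt by blast
    qed
    then show ?thesis unfolding bounded_iff by blast
  qed
qed

lemma D_measurable:
  fixes D :: "real \<Rightarrow> real \<Rightarrow> real"
  assumes Dc: "continuous_on quadrant (\<lambda>r. D (fst r) (snd r))"
    and rm: "r \<in> borel_measurable M" and sm: "s \<in> borel_measurable M"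
    and rn: "\<And>x. 0 \<le> r x" and sn: "\<And>x. 0 \<le> s x"
  shows "(\<lambda>x. D (r x) (s x)) \<in> borel_measurable M"
proof -
  let ?E = "\<lambda>p::real\<times>real. D (max (fst p) 0) (max (snd p) 0)"
  have "continuous_on UNIV (\<lambda>p::real\<times>real. (max (fst p) 0, max (snd p) 0))"
    by (intro continuous_intros)
  moreover have "(\<lambda>p::real\<times>real. (max (fst p) 0, max (snd p) 0)) ` UNIV \<subseteq> quadrant"
    by (auto simp: quadrant_def)
  ultimately have "continuous_on UNIV ((\<lambda>r. D (fst r) (snd r)) \<circ> (\<lambda>p::real\<times>real. (max (fst p) 0, max (snd p) 0)))"
    using continuous_on_subset[OF Dc] by (intro continuous_on_compose) auto
  then have c: "continuous_on UNIV ?E" by (simp add: o_def)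
  have "(\<lambda>x. ?E (r x, s x)) \<in> borel_measurable M"
    by (rule borel_measurable_continuous_on[OF c]) (use rm sm in measurable)
  moreover have "(\<lambda>x. ?E (r x, s x)) = (\<lambda>x. D (r x) (s x))"
    using rn sn by (simp add: fun_eq_iff max_absorb1)
  ultimately show ?thesis by simp
qed

lemma EL_key:
  fixes \<rho> q W :: "'a::euclidean_space \<Rightarrow> real" and \<Psi> D :: "real \<Rightarrow> real \<Rightarrow> real"
  assumes \<rho>m: "\<rho> \<in> borel_measurable lborel" and \<rho>n: "\<And>x. 0 \<le> \<rho> x"
    and qm: "q \<in> borel_measurable lborel" and qn: "\<And>x. 0 \<le> q x"
    and Wc: "continuous_on UNIV W"
    and Dc: "continuous_on quadrant (\<lambda>r. D (fst r) (snd r))"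
    and tang: "\<And>r r' s. 0 \<le> r \<Longrightarrow> 0 \<le> r' \<Longrightarrow> 0 \<le> s \<Longrightarrow> \<Psi> r' s - \<Psi> r s \<le> D r' s * (r' - r)"
    and var: "\<And>g M. g \<in> borel_measurable lborel \<Longrightarrow> (\<And>x. \<bar>g x\<bar> \<le> M) \<Longrightarrow>
       (\<And>x. g x \<noteq> 0 \<Longrightarrow> \<rho> x \<le> M \<and> q x \<le> M \<and> norm x \<le> M) \<Longrightarrow> (\<And>x. 0 \<le> \<rho> x + g x) \<Longrightarrow>
       integrable lborel g \<Longrightarrow> integral\<^sup>L lborel g = 0 \<Longrightarrow>
       integrable lborel (\<lambda>x. \<Psi> (\<rho> x + g x) (q x) - \<Psi> (\<rho> x) (q x) + g x * W x) \<and>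
       0 \<le> (LINT x|lborel. \<Psi> (\<rho> x + g x) (q x) - \<Psi> (\<rho> x) (q x) + g x * W x)"
    and ba: "b < a"
  shows "(AE x in lborel. b \<le> D (\<rho> x) (q x) + W x) \<or> (AE x in lborel. 0 < \<rho> x \<longrightarrow> D (\<rho> x) (q x) + W x \<le> a)"
proof (rule ccontr)
  define \<Phi> where "\<Phi> x = D (\<rho> x) (q x) + W x" for x
  have [measurable]: "\<rho> \<in> borel_measurable lborel" "q \<in> borel_measurable lborel" using \<rho>m qm by auto
  have Wm[measurable]: "W \<in> borel_measurable lborel"
    using borel_measurable_continuous_on[OF Wc, of "\<lambda>x. x"] by simp
  have Dm[measurable]: "(\<lambda>x. D (\<rho> x) (q x)) \<in> borel_measurable lborel"
    by (rule D_measurable[OF Dc \<rho>m qm \<rho>n qn])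
  have \<Phi>m[measurable]: "\<Phi> \<in> borel_measurable lborel" unfolding \<Phi>_def by measurable
  assume "\<not> ((AE x in lborel. b \<le> D (\<rho> x) (q x) + W x) \<or> (AE x in lborel. 0 < \<rho> x \<longrightarrow> D (\<rho> x) (q x) + W x \<le> a))"
  then have nB: "\<not> (AE x in lborel. b \<le> \<Phi> x)" and nA: "\<not> (AE x in lborel. 0 < \<rho> x \<longrightarrow> \<Phi> x \<le> a)"
    unfolding \<Phi>_def by auto
  define An where "An n = {x. 1 / real (Suc n) \<le> \<rho> x \<and> \<rho> x \<le> real n \<and> q x \<le> real n \<and> norm x \<le> real n \<and> a < \<Phi> x}" for n
  define Bn where "Bn n = {x. \<rho> x \<le> real n \<and> q x \<le> real n \<and> norm x \<le> real n \<and> \<Phi> x < b}" for n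
  have big: "\<exists>n. real n \<ge> c" for c :: real by (rule real_arch_simple)
  obtain n where nA': "\<not> (AE x in lborel. x \<notin> An n)"
  proof -
    have "\<exists>n. \<not> (AE x in lborel. x \<notin> An n)"
    proof (rule ccontr)
      assume "\<nexists>n. \<not> (AE x in lborel. x \<notin> An n)"
      then have "AE x in lborel. \<forall>n. x \<notin> An n" by (simp add: AE_all_countable)
      then have "AE x in lborel. 0 < \<rho> x \<longrightarrow> \<Phi> x \<le> a"
      proof (rule AE_mp, intro AE_I2 impI)
        fix x assume all: "\<forall>n. x \<notin> An n" and pos: "0 < \<rho> x"
        show "\<Phi> x \<le> a"
        proof (rule ccontr)
          assume "\<not> \<Phi> x \<le> a"
          obtain n where n: "real n \<ge> max (max (\<rho> x) (q x)) (max (norm x) (1 / \<rho> x))" using big by blast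
          have "1 / real (Suc n) \<le> \<rho> x"
          proof -
            have "1 / \<rho> x \<le> real (Suc n)" using n by linarith
            then show ?thesis using pos by (simp add: field_simps)
          qed
          then have "x \<in> An n" using n \<open>\<not> \<Phi> x \<le> a\<close> unfolding An_def by auto
          then show False using all by blast
        qed
      qed
      then show False using nA by blast
    qed
    then show ?thesis using that by blast
  qed
  obtain m where nB': "\<not> (AE x in lborel. x \<notin> Bn m)"
  proof -
    have "\<exists>n. \<not> (AE x in lborel. x \<notin> Bn n)"
    proof (rule ccontr)
      assume "\<nexists>n. \<not> (AE x in lborel. x \<notin> Bn n)"
      then have "AE x in lborel. \<forall>n. x \<notin> Bn n" by (simp add: AE_all_countable)
      then have "AE x in lborel. b \<le> \<Phi> x"
      proof (rule AE_mp, intro AE_I2 impI)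
        fix x assume all: "\<forall>n. x \<notin> Bn n"
        show "b \<le> \<Phi> x"
        proof (rule ccontr)
          assume "\<not> b \<le> \<Phi> x"
          obtain n where n: "real n \<ge> max (max (\<rho> x) (q x)) (norm x)" using big by blast
          then have "x \<in> Bn n" using \<open>\<not> b \<le> \<Phi> x\<close> unfolding Bn_def by auto
          then show False using all by blast
        qed
      qed
      then show False using nB by blast
    qed
    then show ?thesis using that by blast
  qed
  define A where "A = An n"
  define B where "B = Bn m"
  define M where "M = real (max n m)"
  have Aset[measurable]: "A \<in> sets lborel" unfolding A_def An_def by measurable
  have Bset[measurable]: "B \<in> sets lborel" unfolding B_def Bn_def by measurable
  have nM: "real n \<le> M" "real m \<le> M" unfolding M_def by simp_all
  have Abd: "A \<subseteq> cball 0 M"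
  proof
    fix x assume "x \<in> A" then have "norm x \<le> real n" unfolding A_def An_def by simp
    then show "x \<in> cball 0 M" using nM by simp
  qed
  have Bbd: "B \<subseteq> cball 0 M"
  proof
    fix x assume "x \<in> B" then have "norm x \<le> real m" unfolding B_def Bn_def by simp
    then show "x \<in> cball 0 M" using nM by simp
  qed
  have Afin: "emeasure lborel A < \<infinity>"
    using emeasure_bounded_finite[of A] Abd bounded_cball bounded_subset by blast
  have Bfin: "emeasure lborel B < \<infinity>"
    using emeasure_bounded_finite[of B] Bbd bounded_cball bounded_subset by blast
  have Anz: "emeasure lborel A \<noteq> 0"
    using nA' AE_iff_measurable[of A lborel "\<lambda>x. x \<notin> A"] Aset unfolding A_def by auto
  have Bnz: "emeasure lborel B \<noteq> 0"
    using nB' AE_iff_measurable[of B lborel "\<lambda>x. x \<notin> B"] Bset unfolding B_def by auto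
  define mA where "mA = measure lborel A"
  define mB where "mB = measure lborel B"
  have mA: "mA > 0" unfolding mA_def measure_def using Afin Anz
    by (simp add: enn2real_positive_iff zero_less_iff_neq_zero)
  have mB: "mB > 0" unfolding mB_def measure_def using Bfin Bnz
    by (simp add: enn2real_positive_iff zero_less_iff_neq_zero)
  have disj: "A \<inter> B = {}" unfolding A_def B_def An_def Bn_def using ba by auto
  define \<delta>0 where "\<delta>0 = 1 / real (Suc n)"
  have \<delta>0: "\<delta>0 > 0" unfolding \<delta>0_def by simp
  have \<rho>A: "\<delta>0 \<le> \<rho> x" "\<rho> x \<le> M" "q x \<le> M" "a < \<Phi> x" if "x \<in> A" for x
    using that nM unfolding A_def An_def \<delta>0_def by auto
  have \<rho>B: "\<rho> x \<le> M" "q x \<le> M" "\<Phi> x < b" if "x \<in> B" for x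
    using that nM unfolding B_def Bn_def by auto
  define Q where "Q = {0..M+1} \<times> {0..M}"
  have "compact Q" unfolding Q_def by (intro compact_Times compact_Icc)
  moreover have "continuous_on Q (\<lambda>r. D (fst r) (snd r))"
    by (rule continuous_on_subset[OF Dc]) (auto simp: Q_def quadrant_def)
  ultimately have uc: "uniformly_continuous_on Q (\<lambda>r. D (fst r) (snd r))"
    by (rule compact_uniformly_continuous[rotated])
  define \<eta> where "\<eta> = (a - b) / 4"
  have \<eta>: "\<eta> > 0" unfolding \<eta>_def using ba by simp
  obtain \<delta> where \<delta>: "\<delta> > 0" and \<delta>D: "\<And>p p'. p \<in> Q \<Longrightarrow> p' \<in> Q \<Longrightarrow> dist p' p < \<delta> \<Longrightarrow>
      dist (D (fst p') (snd p')) (D (fst p) (snd p)) < \<eta>"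
    using uc \<eta> unfolding uniformly_continuous_on_def by metis
  define t where "t = min (min (mA * \<delta>0) mB) (min (mA * \<delta>) (mB * \<delta>)) / 2"
  have t: "t > 0" unfolding t_def using mA mB \<delta> \<delta>0 by simp
  have t1: "t \<le> mA * \<delta>0 / 2" "t \<le> mB / 2" "t \<le> mA * \<delta> / 2" "t \<le> mB * \<delta> / 2"
    unfolding t_def by linarith+
  have pp: "0 < mA * \<delta>0" "0 < mA * \<delta>" "0 < mB * \<delta>" using mA mB \<delta> \<delta>0 by simp_all
  have tA: "t / mA \<le> \<delta>0" "t / mA < \<delta>" and tB: "t / mB \<le> 1" "t / mB < \<delta>"
    using t1 pp mA mB by (simp_all add: field_simps mult.commute)
  have tmA0: "0 < t / mA" and tmB0: "0 < t / mB" using t mA mB by simp_all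
  define g where "g x = t * (indicator B x / mB - indicator A x / mA)" for x
  have gm[measurable]: "g \<in> borel_measurable lborel" unfolding g_def by measurable
  have gA: "g x = - (t / mA)" if "x \<in> A" for x using that disj unfolding g_def by (auto simp: indicator_def)
  have gB: "g x = t / mB" if "x \<in> B" for x using that disj unfolding g_def by (auto simp: indicator_def)
  have g0: "g x = 0" if "x \<notin> A" "x \<notin> B" for x using that unfolding g_def by (auto simp: indicator_def)
  have IA: "integrable lborel (indicator A :: 'a \<Rightarrow> real)" using Aset Afin by simp
  have IB: "integrable lborel (indicator B :: 'a \<Rightarrow> real)" using Bset Bfin by simp
  have intA: "(LINT x|lborel. indicator A x :: real) = mA" unfolding mA_def by simp
  have intB: "(LINT x|lborel. indicator B x :: real) = mB" unfolding mB_def by simp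
  have gI: "integrable lborel g" unfolding g_def using IA IB by (intro integrable_mult_right Bochner_Integration.integrable_diff integrable_divide) auto
  have gint: "integral\<^sup>L lborel g = 0"
    unfolding g_def using IA IB mA mB intA intB
    by (simp add: integral_mult_right_zero integral_diff integral_divide_zero)
  define Mb where "Mb = M + t / mA + t / mB"
  have M0: "0 \<le> M" unfolding M_def by simp
  have "integrable lborel (\<lambda>x. \<Psi> (\<rho> x + g x) (q x) - \<Psi> (\<rho> x) (q x) + g x * W x) \<and>
       0 \<le> (LINT x|lborel. \<Psi> (\<rho> x + g x) (q x) - \<Psi> (\<rho> x) (q x) + g x * W x)"
  proof (rule var[OF gm _ _ _ gI gint, of Mb])
    fix x
    show "\<bar>g x\<bar> \<le> Mb" unfolding Mb_def using t mA mB M0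
      by (cases "x \<in> A"; cases "x \<in> B") (auto simp: gA gB g0)
    show "g x \<noteq> 0 \<Longrightarrow> \<rho> x \<le> Mb \<and> q x \<le> Mb \<and> norm x \<le> Mb"
    proof -
      assume "g x \<noteq> 0"
      then have "x \<in> A \<or> x \<in> B" using g0 by blast
      moreover have "M \<le> Mb" unfolding Mb_def using t mA mB by simp
      ultimately show ?thesis using \<rho>A \<rho>B Abd Bbd by force
    qed
    show "0 \<le> \<rho> x + g x"
      using \<rho>A[of x] tA \<rho>n[of x] t mB by (cases "x \<in> A"; cases "x \<in> B") (auto simp: gA gB g0)
  qed
  then have I1: "integrable lborel (\<lambda>x. \<Psi> (\<rho> x + g x) (q x) - \<Psi> (\<rho> x) (q x) + g x * W x)"
    and I1pos: "0 \<le> (LINT x|lborel. \<Psi> (\<rho> x + g x) (q x) - \<Psi> (\<rho> x) (q x) + g x * W x)" by auto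
  define R where "R x = t * ((b + \<eta>) / mB * indicator B x - (a - \<eta>) / mA * indicator A x)" for x
  have RI: "integrable lborel R" unfolding R_def using IA IB
    by (intro integrable_mult_right Bochner_Integration.integrable_diff) auto
  have Rint: "integral\<^sup>L lborel R = t * (b - a + 2 * \<eta>)"
    unfolding R_def using IA IB mA mB intA intB
    by (simp add: integral_mult_right_zero integral_diff field_simps)
  have pw: "\<Psi> (\<rho> x + g x) (q x) - \<Psi> (\<rho> x) (q x) + g x * W x \<le> R x" for x
  proof -
    have tg: "\<Psi> (\<rho> x + g x) (q x) - \<Psi> (\<rho> x) (q x) \<le> D (\<rho> x + g x) (q x) * g x"
      if "0 \<le> \<rho> x + g x" using tang[OF \<rho>n[of x] that qn[of x]] by simp
    consider "x \<in> A" | "x \<in> B" | "x \<notin> A" "x \<notin> B" by blast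
    then show ?thesis
    proof cases
      case 1
      then have xB: "x \<notin> B" using disj by blast
      have pos: "0 \<le> \<rho> x + g x" using \<rho>A[OF 1] tA gA[OF 1] by simp
      have "(\<rho> x, q x) \<in> Q" "(\<rho> x + g x, q x) \<in> Q" using \<rho>A[OF 1] \<rho>n[of x] qn[of x] pos gA[OF 1] tmA0
        by (auto simp: Q_def)
      moreover have "dist (\<rho> x + g x, q x) (\<rho> x, q x) < \<delta>"
        using gA[OF 1] tA t mA by (simp add: dist_Pair_Pair dist_real_def)
      ultimately have "dist (D (\<rho> x + g x) (q x)) (D (\<rho> x) (q x)) < \<eta>" using \<delta>D by fastforce
      then have "D (\<rho> x) (q x) - \<eta> \<le> D (\<rho> x + g x) (q x)" by (simp add: dist_real_def)
      then have "(D (\<rho> x + g x) (q x) + W x) * (- (t / mA)) \<le> (D (\<rho> x) (q x) - \<eta> + W x) * (- (t / mA))"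
        using t mA by (intro mult_right_mono_neg) auto
      also have "\<dots> \<le> (a - \<eta>) * (- (t / mA))"
        using \<rho>A(4)[OF 1] t mA unfolding \<Phi>_def by (intro mult_right_mono_neg) auto
      finally have "(D (\<rho> x + g x) (q x) + W x) * (- (t / mA)) \<le> (a - \<eta>) * (- (t / mA))" .
      then show ?thesis using tg[OF pos] 1 xB gA[OF 1] unfolding R_def by (simp add: algebra_simps)
    next
      case 2
      then have xA: "x \<notin> A" using disj by blast
      have pos: "0 \<le> \<rho> x + g x" using gB[OF 2] t mB \<rho>n[of x] by (simp add: divide_nonneg_pos)
      have "(\<rho> x, q x) \<in> Q" "(\<rho> x + g x, q x) \<in> Q" using \<rho>B[OF 2] \<rho>n[of x] qn[of x] pos gB[OF 2] tB
        by (auto simp: Q_def)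
      moreover have "dist (\<rho> x + g x, q x) (\<rho> x, q x) < \<delta>"
        using gB[OF 2] tB t mB by (simp add: dist_Pair_Pair dist_real_def)
      ultimately have "dist (D (\<rho> x + g x) (q x)) (D (\<rho> x) (q x)) < \<eta>" using \<delta>D by fastforce
      then have "D (\<rho> x + g x) (q x) \<le> D (\<rho> x) (q x) + \<eta>" by (simp add: dist_real_def)
      then have "(D (\<rho> x + g x) (q x) + W x) * (t / mB) \<le> (D (\<rho> x) (q x) + \<eta> + W x) * (t / mB)"
        using t mB by (intro mult_right_mono) auto
      also have "\<dots> \<le> (b + \<eta>) * (t / mB)"
        using \<rho>B(3)[OF 2] t mB unfolding \<Phi>_def by (intro mult_right_mono) auto
      finally have "(D (\<rho> x + g x) (q x) + W x) * (t / mB) \<le> (b + \<eta>) * (t / mB)" .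
      then show ?thesis using tg[OF pos] 2 xA gB[OF 2] unfolding R_def by (simp add: algebra_simps)
    next
      case 3
      then show ?thesis using g0[OF 3] unfolding R_def by simp
    qed
  qed
  have "(LINT x|lborel. \<Psi> (\<rho> x + g x) (q x) - \<Psi> (\<rho> x) (q x) + g x * W x) \<le> integral\<^sup>L lborel R"
    by (rule integral_mono[OF I1 RI pw])
  also have "\<dots> < 0"
  proof -
    have "b - a + 2 * \<eta> < 0" unfolding \<eta>_def using ba by (simp add: field_simps)
    then show ?thesis unfolding Rint using t by (simp add: mult_pos_neg)
  qed
  finally show False using I1pos by simp
qed

lemma EL_const:
  fixes \<rho> q W :: "'a::euclidean_space \<Rightarrow> real" and \<Psi> D :: "real \<Rightarrow> real \<Rightarrow> real"
  assumes \<rho>m: "\<rho> \<in> borel_measurable lborel" and \<rho>n: "\<And>x. 0 \<le> \<rho> x"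
    and \<rho>I: "integrable lborel \<rho>" and \<rho>1: "integral\<^sup>L lborel \<rho> = 1"
    and qm: "q \<in> borel_measurable lborel" and qn: "\<And>x. 0 \<le> q x"
    and Wc: "continuous_on UNIV W" and Wn: "\<And>x. 0 \<le> W x"
    and Dc: "continuous_on quadrant (\<lambda>r. D (fst r) (snd r))"
    and Dn: "\<And>r s. 0 \<le> r \<Longrightarrow> 0 \<le> s \<Longrightarrow> 0 \<le> D r s"
    and tang: "\<And>r r' s. 0 \<le> r \<Longrightarrow> 0 \<le> r' \<Longrightarrow> 0 \<le> s \<Longrightarrow> \<Psi> r' s - \<Psi> r s \<le> D r' s * (r' - r)"
    and var: "\<And>g M. g \<in> borel_measurable lborel \<Longrightarrow> (\<And>x. \<bar>g x\<bar> \<le> M) \<Longrightarrow>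
       (\<And>x. g x \<noteq> 0 \<Longrightarrow> \<rho> x \<le> M \<and> q x \<le> M \<and> norm x \<le> M) \<Longrightarrow> (\<And>x. 0 \<le> \<rho> x + g x) \<Longrightarrow>
       integrable lborel g \<Longrightarrow> integral\<^sup>L lborel g = 0 \<Longrightarrow>
       integrable lborel (\<lambda>x. \<Psi> (\<rho> x + g x) (q x) - \<Psi> (\<rho> x) (q x) + g x * W x) \<and>
       0 \<le> (LINT x|lborel. \<Psi> (\<rho> x + g x) (q x) - \<Psi> (\<rho> x) (q x) + g x * W x)"
  shows "\<exists>C. (AE x in lborel. C \<le> D (\<rho> x) (q x) + W x) \<and> (AE x in lborel. 0 < \<rho> x \<longrightarrow> D (\<rho> x) (q x) + W x \<le> C)"
proof -
  define \<Phi> where "\<Phi> x = D (\<rho> x) (q x) + W x" for x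
  have key: "(AE x in lborel. b \<le> \<Phi> x) \<or> (AE x in lborel. 0 < \<rho> x \<longrightarrow> \<Phi> x \<le> a)" if ba: "b < a" for a b
    unfolding \<Phi>_def using \<rho>m \<rho>n qm qn Wc Dc tang var ba by (rule EL_key)
  define S where "S = {c. AE x in lborel. c \<le> \<Phi> x}"
  have S0: "0 \<in> S" unfolding S_def \<Phi>_def using Dn \<rho>n qn Wn by (auto intro!: AE_I2 add_nonneg_nonneg)
  have npos: "\<not> (AE x in lborel. \<rho> x \<le> 0)"
  proof
    assume "AE x in lborel. \<rho> x \<le> 0"
    then have "AE x in lborel. \<rho> x = 0"
      by (rule AE_mp) (intro AE_I2 impI, simp add: \<rho>n antisym)
    then have "integral\<^sup>L lborel \<rho> = integral\<^sup>L lborel (\<lambda>x. 0::real)" using integral_cong_AE[OF \<rho>m, of "\<lambda>x. 0"] by simp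
    then show False using \<rho>1 by simp
  qed
  obtain N :: nat where N: "\<not> (AE x in lborel. real N \<le> \<Phi> x)"
  proof -
    have "\<exists>N::nat. \<not> (AE x in lborel. real N \<le> \<Phi> x)"
    proof (rule ccontr)
      assume "\<nexists>N::nat. \<not> (AE x in lborel. real N \<le> \<Phi> x)"
      then have "AE x in lborel. \<forall>N::nat. real N \<le> \<Phi> x" by (simp add: AE_all_countable)
      then have "AE x in lborel. \<rho> x \<le> 0"
      proof (rule AE_mp, intro AE_I2 impI)
        fix x assume "\<forall>N::nat. real N \<le> \<Phi> x"
        moreover obtain N :: nat where "\<Phi> x < real N" using reals_Archimedean2 by blast
        ultimately show "\<rho> x \<le> 0" by (meson not_le)
      qed
      then show False using npos by blast
    qed
    then show ?thesis using that by blast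
  qed
  have Sbd: "c \<le> real N" if "c \<in> S" for c
  proof (rule ccontr)
    assume "\<not> c \<le> real N"
    have "AE x in lborel. c \<le> \<Phi> x" using that unfolding S_def by simp
    then have "AE x in lborel. real N \<le> \<Phi> x"
      by (rule AE_mp) (intro AE_I2 impI, use \<open>\<not> c \<le> real N\<close> in linarith)
    then show False using N by blast
  qed
  have bdd: "bdd_above S" using Sbd by (auto simp: bdd_above_def)
  have Sne: "S \<noteq> {}" using S0 by blast
  define C where "C = Sup S"
  have low: "AE x in lborel. C \<le> \<Phi> x"
  proof -
    have "AE x in lborel. C - 1 / real (Suc k) \<le> \<Phi> x" for k
    proof -
      have "C - 1 / real (Suc k) < Sup S" unfolding C_def by simp
      then obtain c where c: "c \<in> S" "C - 1 / real (Suc k) < c" using less_cSup_iff[OF Sne bdd] by blast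
      have "AE x in lborel. c \<le> \<Phi> x" using c unfolding S_def by simp
      then show ?thesis
        by (rule AE_mp) (intro AE_I2 impI, use c(2) in linarith)
    qed
    then have "AE x in lborel. \<forall>k. C - 1 / real (Suc k) \<le> \<Phi> x" by (simp add: AE_all_countable)
    then show ?thesis
    proof (rule AE_mp, intro AE_I2 impI)
      fix x assume a: "\<forall>k. C - 1 / real (Suc k) \<le> \<Phi> x"
      show "C \<le> \<Phi> x"
      proof (rule ccontr)
        assume "\<not> C \<le> \<Phi> x"
        then have "0 < C - \<Phi> x" by simp
        then obtain k where "inverse (real (Suc k)) < C - \<Phi> x" using reals_Archimedean by blast
        then have "1 / real (Suc k) < C - \<Phi> x" by (simp add: inverse_eq_divide)
        then show False using a[rule_format, of k] by linarith
      qed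
    qed
  qed
  have up: "AE x in lborel. 0 < \<rho> x \<longrightarrow> \<Phi> x \<le> C"
  proof -
    have "AE x in lborel. 0 < \<rho> x \<longrightarrow> \<Phi> x \<le> C + 1 / real (Suc k)" for k
    proof -
      define b where "b = C + 1 / (2 * real (Suc k))"
      have ba: "b < C + 1 / real (Suc k)" unfolding b_def by (simp add: field_simps)
      have "b \<notin> S"
      proof
        assume "b \<in> S"
        then have "b \<le> C" unfolding C_def using cSup_upper[OF _ bdd] by blast
        then show False unfolding b_def by simp
      qed
      then have "\<not> (AE x in lborel. b \<le> \<Phi> x)" unfolding S_def by simp
      then show ?thesis using key[OF ba] by blast
    qed
    then have "AE x in lborel. \<forall>k. 0 < \<rho> x \<longrightarrow> \<Phi> x \<le> C + 1 / real (Suc k)" by (simp only: AE_all_countable) blast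
    then show ?thesis
    proof (rule AE_mp, intro AE_I2 impI)
      fix x assume a: "\<forall>k. 0 < \<rho> x \<longrightarrow> \<Phi> x \<le> C + 1 / real (Suc k)" and p: "0 < \<rho> x"
      show "\<Phi> x \<le> C"
      proof (rule ccontr)
        assume "\<not> \<Phi> x \<le> C"
        then have "0 < \<Phi> x - C" by simp
        then obtain k where "inverse (real (Suc k)) < \<Phi> x - C" using reals_Archimedean by blast
        then have "1 / real (Suc k) < \<Phi> x - C" by (simp add: inverse_eq_divide)
        then show False using a[rule_format, of k] p by linarith
      qed
    qed
  qed
  show ?thesis using low up unfolding \<Phi>_def by blast
qed

lemma open_pos_measure:
  fixes U :: "'a::euclidean_space set"
  assumes "open U" "U \<noteq> {}"
  shows "emeasure lborel U \<noteq> 0"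
proof -
  obtain y where y: "y \<in> U" using assms by blast
  obtain r where r: "r > 0" "ball y r \<subseteq> U" using assms(1) y open_contains_ball by blast
  have "0 < measure lborel (ball y r)" using content_ball_pos[OF r(1)] by simp
  then have "emeasure lborel (ball y r) \<noteq> 0"
    by (metis emeasure_eq_ennreal_measure emeasure_lborel_ball_finite ennreal_eq_0_iff less_le_not_le order_less_imp_not_eq2 top.not_eq_extremum)
  moreover have "emeasure lborel (ball y r) \<le> emeasure lborel U"
    using r(2) assms(1) by (intro emeasure_mono) auto
  ultimately show ?thesis by (metis le_zero_eq)
qed

lemma supp_char:
  fixes \<rho> V :: "'a::euclidean_space \<Rightarrow> real"
  assumes \<rho>m: "\<rho> \<in> borel_measurable lborel" and \<rho>n: "\<And>x. 0 \<le> \<rho> x"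
    and \<rho>1: "integral\<^sup>L lborel \<rho> = 1"
    and Vc: "continuous_on UNIV V" and Vcv: "convex_on UNIV V" and Vn: "\<And>x. 0 \<le> V x"
    and Vb: "bounded {x. V x \<le> C}"
    and ae: "AE x in lborel. (0 < \<rho> x \<longleftrightarrow> V x < C)"
  shows "C > 0" "dsupp \<rho> = {x. V x \<le> C}" "compact (dsupp \<rho>)" "convex (dsupp \<rho>)"
proof -
  define U where "U = {x. V x < C}"
  have Uo: "open U" unfolding U_def by (rule open_Collect_less[OF Vc continuous_on_const])
  have [measurable]: "U \<in> sets lborel" using Uo by simp
  have [measurable]: "\<rho> \<in> borel_measurable borel" using \<rho>m by simp
  have [measurable]: "ball x e \<in> sets borel" for x :: 'a and e by simp
  have npos: "\<not> (AE x in lborel. \<rho> x \<le> 0)"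
  proof
    assume "AE x in lborel. \<rho> x \<le> 0"
    then have "AE x in lborel. \<rho> x = 0"
      by (rule AE_mp) (intro AE_I2 impI, simp add: \<rho>n antisym)
    then have "integral\<^sup>L lborel \<rho> = integral\<^sup>L lborel (\<lambda>x. 0::real)"
      using integral_cong_AE[OF \<rho>m, of "\<lambda>x. 0"] by simp
    then show False using \<rho>1 by simp
  qed
  have Une: "U \<noteq> {}"
  proof
    assume "U = {}"
    then have "AE x in lborel. \<rho> x \<le> 0"
      using ae by (rule_tac AE_mp[OF ae]) (auto simp: U_def intro!: AE_I2)
    then show False using npos by blast
  qed
  then obtain z where z: "V z < C" unfolding U_def by blast
  show "C > 0" using z Vn[of z] by linarith
  have cl: "closure U = {x. V x \<le> C}"
  proof
    have "closed {x. V x \<le> C}" by (rule closed_Collect_le[OF Vc continuous_on_const])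
    then show "closure U \<subseteq> {x. V x \<le> C}" unfolding U_def
      by (rule closure_minimal[rotated]) auto
    show "{x. V x \<le> C} \<subseteq> closure U"
    proof
      fix x assume x: "x \<in> {x. V x \<le> C}"
      show "x \<in> closure U" unfolding closure_approachable
      proof (intro allI impI)
        fix e :: real assume e: "e > 0"
        define t where "t = min 1 (e / (2 * (norm (z - x) + 1)))"
        have "0 < 2 * (norm (z - x) + 1)" by (simp add: add_nonneg_pos)
        then have "0 < e / (2 * (norm (z - x) + 1))" using e by (rule divide_pos_pos[rotated])
        then have t: "0 < t" "t \<le> 1" unfolding t_def by auto
        have "V ((1 - t) *\<^sub>R x + t *\<^sub>R z) \<le> (1 - t) * V x + t * V z"
          using t by (intro convex_onD[OF Vcv]) auto
        also have "\<dots> < C"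
        proof -
          have "(1 - t) * V x \<le> (1 - t) * C" using x t by (intro mult_left_mono) auto
          moreover have "t * V z < t * C" using z t by simp
          ultimately show ?thesis by (simp add: algebra_simps)
        qed
        finally have inU: "(1 - t) *\<^sub>R x + t *\<^sub>R z \<in> U" unfolding U_def by simp
        have "dist ((1 - t) *\<^sub>R x + t *\<^sub>R z) x = t * norm (z - x)"
          using t by (simp add: dist_norm algebra_simps flip: scaleR_diff_right)
        also have "\<dots> \<le> e / (2 * (norm (z - x) + 1)) * norm (z - x)"
          unfolding t_def by (intro mult_right_mono) auto
        also have "\<dots> < e"
        proof -
          have p: "0 < 2 * (norm (z - x) + 1)" by (simp add: add_nonneg_pos)
          have "norm (z - x) < 1 * (2 * (norm (z - x) + 1))" by (simp add: add_nonneg_pos)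
          then have "norm (z - x) / (2 * (norm (z - x) + 1)) < 1"
            using p by (simp only: divide_less_eq) simp
          then have "e * (norm (z - x) / (2 * (norm (z - x) + 1))) < e * 1" using e by (intro mult_strict_left_mono)
          then show ?thesis by simp
        qed
        finally show "\<exists>y\<in>U. dist y x < e" using inU by blast
      qed
    qed
  qed
  have ds: "x \<in> dsupp \<rho> \<longleftrightarrow> x \<in> closure U" for x
  proof -
    have eq: "(0 < emeasure (density lborel (\<lambda>y. ennreal (\<rho> y))) (ball x e)) \<longleftrightarrow> ball x e \<inter> U \<noteq> {}" for e
    proof -
      have "emeasure (density lborel (\<lambda>y. ennreal (\<rho> y))) (ball x e) = (\<integral>\<^sup>+ y. ennreal (\<rho> y) * indicator (ball x e) y \<partial>lborel)"
        by (rule emeasure_density) auto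
      moreover have "(\<integral>\<^sup>+ y. ennreal (\<rho> y) * indicator (ball x e) y \<partial>lborel) = 0 \<longleftrightarrow>
          (AE y in lborel. ennreal (\<rho> y) * indicator (ball x e) y = 0)"
        by (rule nn_integral_0_iff_AE) measurable
      moreover have "(AE y in lborel. ennreal (\<rho> y) * indicator (ball x e) y = 0) \<longleftrightarrow>
          (AE y in lborel. y \<notin> ball x e \<inter> U)"
      proof
        assume a: "AE y in lborel. ennreal (\<rho> y) * indicator (ball x e) y = 0"
        show "AE y in lborel. y \<notin> ball x e \<inter> U"
          using a ae by eventually_elim (auto simp: U_def indicator_def split: if_splits)
      next
        assume a: "AE y in lborel. y \<notin> ball x e \<inter> U"
        show "AE y in lborel. ennreal (\<rho> y) * indicator (ball x e) y = 0"
          using a ae by eventually_elim (use \<rho>n in \<open>auto simp: U_def indicator_def not_less split: if_splits intro: antisym\<close>)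
      qed
      moreover have "(AE y in lborel. y \<notin> ball x e \<inter> U) \<longleftrightarrow> emeasure lborel (ball x e \<inter> U) = 0"
        by (rule AE_iff_measurable) auto
      moreover have "emeasure lborel (ball x e \<inter> U) = 0 \<longleftrightarrow> ball x e \<inter> U = {}"
        using open_pos_measure[of "ball x e \<inter> U"] Uo by auto
      ultimately show ?thesis by (simp add: zero_less_iff_neq_zero)
    qed
    show ?thesis unfolding dsupp_def closure_approachable mem_Collect_eq eq
      by (auto simp: dist_commute) (metis IntI dist_commute empty_iff mem_ball)
  qed
  then have dsU: "dsupp \<rho> = closure U" by blast
  show "dsupp \<rho> = {x. V x \<le> C}" using dsU cl by simp
  show "compact (dsupp \<rho>)" unfolding dsU cl compact_eq_bounded_closed
    using Vb closed_Collect_le[OF Vc continuous_on_const] by blast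
  show "convex (dsupp \<rho>)" unfolding dsU cl
  proof (rule convexI)
    fix x y and u v :: real assume xy: "x \<in> {x. V x \<le> C}" "y \<in> {x. V x \<le> C}" and uv: "0 \<le> u" "0 \<le> v" "u + v = 1"
    have u: "u = 1 - v" using uv by simp
    have "V ((1 - v) *\<^sub>R x + v *\<^sub>R y) \<le> (1 - v) * V x + v * V y" using uv by (intro convex_onD[OF Vcv]) auto
    also have "\<dots> \<le> (1 - v) * C + v * C" using xy uv u by (intro add_mono mult_left_mono) auto
    also have "\<dots> = C" by (simp add: algebra_simps)
    finally show "u *\<^sub>R x + v *\<^sub>R y \<in> {x. V x \<le> C}" using u by simp
  qed
qed

lemma F_parts:
  assumes "F_hyp F F' F''"
  shows "\<And>r. 0 \<le> r \<Longrightarrow> (F has_real_derivative F' r) (at r within {0..})"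
    "\<And>r. 0 \<le> r \<Longrightarrow> (F' has_real_derivative F'' r) (at r within {0..})"
    "\<And>r. 0 < r \<Longrightarrow> 0 < F'' r" "F 0 = 0" "F' 0 = 0" "\<And>r. 0 \<le> r \<Longrightarrow> 0 \<le> F r"
  using assms unfolding F_hyp_def by auto

lemma deriv_cont_on:
  assumes "\<And>r. 0 \<le> r \<Longrightarrow> (f has_real_derivative f' r) (at r within {0..})"
  shows "continuous_on {0..} f"
  using assms by (intro has_derivative_continuous_on[of _ _ "\<lambda>r h. f' r * h"]) (auto simp: has_field_derivative_def)

lemma F'_strict:
  assumes hF: "F_hyp F F' F''" and xy: "0 \<le> x" "x < y"
  shows "F' x < F' y"
proof -
  note p = F_parts[OF hF]
  have "\<exists>z\<in>{x<..<y}. F' y - F' x = (\<lambda>h. F'' z * h) (y - x)"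
  proof (rule mvt_simple[OF xy(2)])
    fix z assume "x \<le> z" "z \<le> y"
    then have "(F' has_real_derivative F'' z) (at z within {0..})" using p(2) xy by simp
    then show "(F' has_derivative (\<lambda>h. F'' z * h)) (at z within {x..y})"
      unfolding has_field_derivative_def by (rule has_derivative_subset) (use xy in auto)
  qed
  then obtain z where z: "x < z" "z < y" "F' y - F' x = (y - x) * F'' z" by auto
  have "0 < F'' z" using p(3) z xy by simp
  moreover have "0 < y - x" using xy by simp
  ultimately have "0 < (y - x) * F'' z" by simp
  then show ?thesis using z by linarith
qed

lemma convex_deriv_mono:
  fixes \<phi> d :: "real \<Rightarrow> real"
  assumes cv: "convex_on {0..} \<phi>" and der: "\<And>r. 0 \<le> r \<Longrightarrow> (\<phi> has_real_derivative d r) (at r within {0..})"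
    and dc: "continuous_on {0..} d"
    and xy: "0 \<le> x" "x \<le> y"
  shows "d x \<le> d y"
proof -
  have pos: "d x \<le> d y" if xy: "0 < x" "x \<le> y" for x y
  proof -
    have i: "x \<in> interior {0..}" "y \<in> interior {0..}" using xy by auto
    have "\<phi> y - \<phi> x \<ge> d x * (y - x)"
      by (rule convex_on_imp_above_tangent[OF cv _ i(1)]) (use xy der in auto)
    moreover have "\<phi> x - \<phi> y \<ge> d y * (x - y)"
      by (rule convex_on_imp_above_tangent[OF cv _ i(2)]) (use xy der in auto)
    ultimately have "0 \<le> (d y - d x) * (y - x)" by (simp add: algebra_simps)
    then show ?thesis using xy by (cases "x = y") (auto simp: zero_le_mult_iff)
  qed
  show ?thesis
  proof (cases "x = 0")
    case False then show ?thesis using pos xy by simp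
  next
    case True
    show ?thesis
    proof (cases "y = 0")
      case True then show ?thesis using \<open>x = 0\<close> by simp
    next
      case False
      then have y: "0 < y" using xy by simp
      show ?thesis
      proof (rule ccontr)
        assume "\<not> d x \<le> d y"
        then have gap: "0 < d 0 - d y" using True by simp
        have "continuous (at 0 within {0..}) d" using dc by (simp add: continuous_on_eq_continuous_within)
        then obtain \<delta> where \<delta>: "\<delta> > 0" "\<And>z. z \<in> {0..} \<Longrightarrow> dist z 0 < \<delta> \<Longrightarrow> dist (d z) (d 0) < d 0 - d y"
          using gap unfolding continuous_within_eps_delta by metis
        define z where "z = min (\<delta> / 2) y"
        have z: "0 < z" "z \<le> y" "dist z 0 < \<delta>" unfolding z_def using \<delta> y by (auto simp: dist_real_def)
        have "dist (d z) (d 0) < d 0 - d y" using \<delta>(2)[of z] z by simp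
        then have "d y < d z" by (simp add: dist_real_def)
        moreover have "d z \<le> d y" using pos z by simp
        ultimately show False by simp
      qed
    qed
  qed
qed

lemma D_props:
  fixes Fa Fa' Fa'' :: "real \<Rightarrow> real" and H Ha :: "real \<times> real \<Rightarrow> real"
  assumes hF: "F_hyp Fa Fa' Fa''"
    and dH: "\<And>r s. 0 \<le> r \<Longrightarrow> 0 \<le> s \<Longrightarrow> ((\<lambda>r. H (r, s)) has_real_derivative Ha (r, s)) (at r within {0..})"
    and Hac: "continuous_on quadrant Ha"
    and Ha0: "\<And>s. 0 \<le> s \<Longrightarrow> Ha (0, s) = 0"
    and cvx: "\<And>s. 0 \<le> s \<Longrightarrow> convex_on {0..} (\<lambda>r. Fa r + 2 * \<epsilon>0 * H (r, s))"
    and e: "0 < \<epsilon>" "\<epsilon> \<le> \<epsilon>0"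
  shows "continuous_on quadrant (\<lambda>p. Fa' (fst p) + \<epsilon> * Ha p)"
    "\<And>s. 0 \<le> s \<Longrightarrow> Fa' 0 + \<epsilon> * Ha (0, s) = 0"
    "\<And>r r' s. 0 \<le> r \<Longrightarrow> r < r' \<Longrightarrow> 0 \<le> s \<Longrightarrow> Fa' r + \<epsilon> * Ha (r, s) < Fa' r' + \<epsilon> * Ha (r', s)"
    "\<And>r r' s. 0 \<le> r \<Longrightarrow> 0 \<le> r' \<Longrightarrow> 0 \<le> s \<Longrightarrow>
        (Fa r' + \<epsilon> * H (r', s)) - (Fa r + \<epsilon> * H (r, s)) \<le> (Fa' r' + \<epsilon> * Ha (r', s)) * (r' - r)"
proof -
  note p = F_parts[OF hF]
  have Fc: "continuous_on {0..} Fa'" by (rule deriv_cont_on[OF p(2)])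
  have Fc': "continuous_on quadrant (\<lambda>p. Fa' (fst p))"
    by (rule continuous_on_compose2[OF Fc continuous_on_fst[OF continuous_on_id]]) (auto simp: quadrant_def)
  show Dc: "continuous_on quadrant (\<lambda>p. Fa' (fst p) + \<epsilon> * Ha p)"
    by (intro continuous_intros Fc' Hac)
  show D0: "Fa' 0 + \<epsilon> * Ha (0, s) = 0" if "0 \<le> s" for s using p(5) Ha0[OF that] by simp
  have Hsc: "continuous_on {0..} (\<lambda>r. Ha (r, s))" if "0 \<le> s" for s
    by (rule continuous_on_compose2[OF Hac]) (use that in \<open>auto simp: quadrant_def intro!: continuous_intros\<close>)
  have mono0: "Fa' x + 2 * \<epsilon>0 * Ha (x, s) \<le> Fa' y + 2 * \<epsilon>0 * Ha (y, s)" if "0 \<le> x" "x \<le> y" "0 \<le> s" for x y s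
  proof (rule convex_deriv_mono[where d="\<lambda>r. Fa' r + 2 * \<epsilon>0 * Ha (r, s)", OF cvx[OF that(3)] _ _ that(1,2)])
    fix r :: real assume r: "0 \<le> r"
    show "((\<lambda>r. Fa r + 2 * \<epsilon>0 * H (r, s)) has_real_derivative Fa' r + 2 * \<epsilon>0 * Ha (r, s)) (at r within {0..})"
      by (intro DERIV_add DERIV_cmult p(1) dH r that(3))
  next
    show "continuous_on {0..} (\<lambda>r. Fa' r + 2 * \<epsilon>0 * Ha (r, s))"
      by (intro continuous_intros Fc Hsc that(3))
  qed
  define \<theta> where "\<theta> = \<epsilon> / (2 * \<epsilon>0)"
  have \<theta>: "0 < \<theta>" "\<theta> < 1" unfolding \<theta>_def using e by (auto simp: field_simps)
  have De: "Fa' r + \<epsilon> * Ha (r, s) = (1 - \<theta>) * Fa' r + \<theta> * (Fa' r + 2 * \<epsilon>0 * Ha (r, s))" for r s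
    unfolding \<theta>_def using e by (simp add: field_simps)
  show strict: "Fa' r + \<epsilon> * Ha (r, s) < Fa' r' + \<epsilon> * Ha (r', s)" if "0 \<le> r" "r < r'" "0 \<le> s" for r r' s
  proof -
    have "(1 - \<theta>) * Fa' r < (1 - \<theta>) * Fa' r'" using F'_strict[OF hF that(1,2)] \<theta> by simp
    moreover have "\<theta> * (Fa' r + 2 * \<epsilon>0 * Ha (r, s)) \<le> \<theta> * (Fa' r' + 2 * \<epsilon>0 * Ha (r', s))"
      using mono0[of r r' s] that \<theta> by (intro mult_left_mono) auto
    ultimately show ?thesis unfolding De by simp
  qed
  have mono: "Fa' r + \<epsilon> * Ha (r, s) \<le> Fa' r' + \<epsilon> * Ha (r', s)" if "0 \<le> r" "r \<le> r'" "0 \<le> s" for r r' s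
    using strict[of r r' s] that by (cases "r = r'") auto
  show "(Fa r' + \<epsilon> * H (r', s)) - (Fa r + \<epsilon> * H (r, s)) \<le> (Fa' r' + \<epsilon> * Ha (r', s)) * (r' - r)"
    if r: "0 \<le> r" "0 \<le> r'" "0 \<le> s" for r r' s
  proof -
    let ?f = "\<lambda>r. Fa r + \<epsilon> * H (r, s)"
    let ?d = "\<lambda>r. Fa' r + \<epsilon> * Ha (r, s)"
    have der: "(?f has_derivative (\<lambda>h. ?d z * h)) (at z within {a..b})" if "0 \<le> a" "a \<le> z" "z \<le> b" for a b z
    proof -
      have "(?f has_real_derivative ?d z) (at z within {0..})"
        by (intro DERIV_add DERIV_cmult p(1) dH r(3)) (use that in auto)
      then show ?thesis unfolding has_field_derivative_def
        by (rule has_derivative_subset) (use that in auto)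
    qed
    show ?thesis
    proof (cases "r \<le> r'")
      case True
      obtain z where z: "z \<in> {r..r'}" "?f r' - ?f r = (r' - r) * ?d z"
        using mvt_very_simple[OF True, of ?f "\<lambda>z h. ?d z * h"] der r by force
      have "?d z \<le> ?d r'" using mono[of z r' s] z r by auto
      then have "(r' - r) * ?d z \<le> (r' - r) * ?d r'" using True by (intro mult_left_mono) auto
      then show ?thesis using z by (simp add: mult.commute)
    next
      case False
      then have le: "r' \<le> r" by simp
      obtain z where z: "z \<in> {r'..r}" "?f r - ?f r' = (r - r') * ?d z"
        using mvt_very_simple[OF le, of ?f "\<lambda>z h. ?d z * h"] der r by force
      have "?d r' \<le> ?d z" using mono[of r' z s] z r by auto
      then have "(r - r') * ?d r' \<le> (r - r') * ?d z" using le by (intro mult_left_mono) auto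
      then show ?thesis using z by (simp add: algebra_simps)
    qed
  qed
qed

lemma Kg_bound:
  fixes K :: "'a::euclidean_space \<Rightarrow> real"
  assumes Kn: "\<And>z. 0 \<le> K z" and Ku: "\<And>z. K z \<le> CK / 2 * (norm z)\<^sup>2" and CK: "0 \<le> CK"
    and gb: "\<And>y. \<bar>g y\<bar> \<le> B" and gs: "\<And>y. g y \<noteq> 0 \<Longrightarrow> norm y \<le> R"
  shows "\<bar>K (x - y) * g y\<bar> \<le> B * CK * ((norm x)\<^sup>2 + R\<^sup>2) * indicator (cball 0 R) y"
proof (cases "g y = 0")
  case True
  have "0 \<le> B" using gb[of y] by simp
  then show ?thesis using True CK by (simp add: indicator_def)
next
  case False
  then have y: "norm y \<le> R" using gs by blast
  have "K (x - y) \<le> CK / 2 * (2 * (norm x)\<^sup>2 + 2 * (norm y)\<^sup>2)"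
    using Ku[of "x - y"] mult_left_mono[OF norm_diff_sq_le[of x y], of "CK / 2"] CK by simp
  also have "\<dots> \<le> CK * ((norm x)\<^sup>2 + R\<^sup>2)"
    using y CK by (simp add: algebra_simps mult_left_mono power_mono)
  finally have k: "K (x - y) \<le> CK * ((norm x)\<^sup>2 + R\<^sup>2)" .
  have "\<bar>K (x - y) * g y\<bar> = K (x - y) * \<bar>g y\<bar>" using Kn[of "x - y"] by (simp add: abs_mult)
  also have "\<dots> \<le> CK * ((norm x)\<^sup>2 + R\<^sup>2) * B"
    using k gb[of y] Kn[of "x - y"] CK by (intro mult_mono) auto
  finally show ?thesis using y by (simp add: indicator_def mult_ac)
qed

lemma conv_g:
  fixes K :: "'a::euclidean_space \<Rightarrow> real"
  assumes Kc: "continuous_on UNIV K" and Kn: "\<And>z. 0 \<le> K z" and Ku: "\<And>z. K z \<le> CK / 2 * (norm z)\<^sup>2" and CK: "0 \<le> CK"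
    and gm: "g \<in> borel_measurable lborel"
    and gb: "\<And>y. \<bar>g y\<bar> \<le> B" and gs: "\<And>y. g y \<noteq> 0 \<Longrightarrow> norm y \<le> R"
  shows "integrable lborel (\<lambda>y. K (x - y) * g y)"
    "(LINT y|lborel. \<bar>K (x - y) * g y\<bar>) \<le> B * CK * ((norm x)\<^sup>2 + R\<^sup>2) * measure lborel (cball (0::'a) R)"
    "\<bar>conv K g x\<bar> \<le> B * CK * ((norm x)\<^sup>2 + R\<^sup>2) * measure lborel (cball (0::'a) R)"
proof -
  have [measurable]: "K \<in> borel_measurable borel" using borel_measurable_continuous_onI[OF Kc] .
  have [measurable]: "g \<in> borel_measurable borel" using gm by simp
  have kb: "\<bar>K (x - y) * g y\<bar> \<le> B * CK * ((norm x)\<^sup>2 + R\<^sup>2) * indicator (cball 0 R) y" for y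
    using Kn Ku CK gb gs by (rule Kg_bound)
  have cbf: "emeasure lborel (cball (0::'a) R) < top" using emeasure_bounded_finite[OF bounded_cball] by simp
  have ci: "integrable lborel (\<lambda>y. B * CK * ((norm x)\<^sup>2 + R\<^sup>2) * indicator (cball (0::'a) R) y)"
    by (intro integrable_mult_right integrable_real_indicator) (auto simp: cbf)
  show I: "integrable lborel (\<lambda>y. K (x - y) * g y)"
  proof (rule Bochner_Integration.integrable_bound[OF ci])
    show "(\<lambda>y. K (x - y) * g y) \<in> borel_measurable lborel" by measurable
    show "AE y in lborel. norm (K (x - y) * g y) \<le> norm (B * CK * ((norm x)\<^sup>2 + R\<^sup>2) * indicator (cball 0 R) y)"
      by (intro AE_I2) (metis kb abs_ge_self order_trans real_norm_def)
  qed
  have "(LINT y|lborel. \<bar>K (x - y) * g y\<bar>) \<le> (LINT y|lborel. B * CK * ((norm x)\<^sup>2 + R\<^sup>2) * indicator (cball (0::'a) R) y)"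
    by (rule integral_mono[OF _ ci]) (use I kb in auto)
  also have "\<dots> = B * CK * ((norm x)\<^sup>2 + R\<^sup>2) * measure lborel (cball (0::'a) R)"
    using cbf by simp
  finally show L: "(LINT y|lborel. \<bar>K (x - y) * g y\<bar>) \<le> B * CK * ((norm x)\<^sup>2 + R\<^sup>2) * measure lborel (cball (0::'a) R)" .
  have "\<bar>conv K g x\<bar> \<le> (LINT y|lborel. \<bar>K (x - y) * g y\<bar>)"
    unfolding conv_def by (rule integral_abs_bound)
  then show "\<bar>conv K g x\<bar> \<le> B * CK * ((norm x)\<^sup>2 + R\<^sup>2) * measure lborel (cball (0::'a) R)" using L by linarith
qed

lemma fubini_conv:
  fixes K :: "'a::euclidean_space \<Rightarrow> real"
  assumes Kc: "continuous_on UNIV K" and Kn: "\<And>z. 0 \<le> K z" and Ku: "\<And>z. K z \<le> CK / 2 * (norm z)\<^sup>2" and CK: "0 \<le> CK"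
    and Ks: "\<And>z. K (- z) = K z" and P: "P2dens \<rho>"
    and gm: "g \<in> borel_measurable lborel"
    and gb: "\<And>y. \<bar>g y\<bar> \<le> B" and gs: "\<And>y. g y \<noteq> 0 \<Longrightarrow> norm y \<le> R"
  shows "integrable lborel (\<lambda>x. \<rho> x * conv K g x)"
    "(LINT x|lborel. \<rho> x * conv K g x) = (LINT y|lborel. g y * conv K \<rho> y)"
proof -
  note p = P2dens_parts[OF P]
  note cg = conv_g[OF Kc Kn Ku CK gm gb gs]
  have [measurable]: "K \<in> borel_measurable borel" using borel_measurable_continuous_onI[OF Kc] .
  have [measurable]: "g \<in> borel_measurable borel" using gm by simp
  have [measurable]: "\<rho> \<in> borel_measurable borel" using p(1) by simp
  define m where "m = measure lborel (cball (0::'a) R)"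
  have m: "0 \<le> m" unfolding m_def by simp
  have B: "0 \<le> B" using gb[of 0] by simp
  define c where "c = B * CK * m"
  have c: "0 \<le> c" unfolding c_def using B CK m by simp
  have bI: "integrable lborel (\<lambda>x. c * ((norm x)\<^sup>2 * \<rho> x) + c * R\<^sup>2 * \<rho> x)"
    by (intro Bochner_Integration.integrable_add integrable_mult_right) (auto simp: p)
  have bnd: "\<rho> x * (B * CK * ((norm x)\<^sup>2 + R\<^sup>2) * m) = c * ((norm x)\<^sup>2 * \<rho> x) + c * R\<^sup>2 * \<rho> x" for x
    unfolding c_def by (simp add: algebra_simps)
  have cm[measurable]: "conv K g \<in> borel_measurable lborel"
    unfolding conv_def by (rule lborel.borel_measurable_lebesgue_integral) measurable
  show I: "integrable lborel (\<lambda>x. \<rho> x * conv K g x)"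
  proof (rule Bochner_Integration.integrable_bound[OF bI])
    show "(\<lambda>x. \<rho> x * conv K g x) \<in> borel_measurable lborel" by measurable
    show "AE x in lborel. norm (\<rho> x * conv K g x) \<le> norm (c * ((norm x)\<^sup>2 * \<rho> x) + c * R\<^sup>2 * \<rho> x)"
    proof (intro AE_I2)
      fix x
      have "\<bar>\<rho> x * conv K g x\<bar> \<le> \<rho> x * (B * CK * ((norm x)\<^sup>2 + R\<^sup>2) * m)"
        using cg(3)[of x] p(2)[of x] unfolding m_def by (simp add: abs_mult mult_left_mono)
      then show "norm (\<rho> x * conv K g x) \<le> norm (c * ((norm x)\<^sup>2 * \<rho> x) + c * R\<^sup>2 * \<rho> x)"
        unfolding bnd by simp
    qed
  qed
  define f where "f x y = \<rho> x * (K (x - y) * g y)" for x y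
  have fm[measurable]: "case_prod f \<in> borel_measurable (lborel \<Otimes>\<^sub>M lborel)" unfolding f_def by measurable
  have fI: "integrable (lborel \<Otimes>\<^sub>M lborel) (case_prod f)"
  proof (rule lborel_pair.Fubini_integrable[OF fm])
    show "AE x in lborel. integrable lborel (\<lambda>y. case_prod f (x, y))"
      unfolding f_def using cg(1) by (intro AE_I2) (simp add: integrable_mult_right)
    show "integrable lborel (\<lambda>x. LINT y|lborel. norm (case_prod f (x, y)))"
    proof (rule Bochner_Integration.integrable_bound[OF bI])
      show "(\<lambda>x. LINT y|lborel. norm (case_prod f (x, y))) \<in> borel_measurable lborel"
        by (rule lborel.borel_measurable_lebesgue_integral) measurable
      show "AE x in lborel. norm (LINT y|lborel. norm (case_prod f (x, y))) \<le> norm (c * ((norm x)\<^sup>2 * \<rho> x) + c * R\<^sup>2 * \<rho> x)"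
      proof (intro AE_I2)
        fix x
        have eq: "(LINT y|lborel. norm (case_prod f (x, y))) = \<rho> x * (LINT y|lborel. \<bar>K (x - y) * g y\<bar>)"
          unfolding f_def using p(2)[of x] by (simp add: abs_mult)
        have nn: "0 \<le> (LINT y|lborel. \<bar>K (x - y) * g y\<bar>)" by simp
        have "\<rho> x * (LINT y|lborel. \<bar>K (x - y) * g y\<bar>) \<le> \<rho> x * (B * CK * ((norm x)\<^sup>2 + R\<^sup>2) * m)"
          using cg(2)[of x] p(2)[of x] unfolding m_def by (simp add: mult_left_mono)
        then show "norm (LINT y|lborel. norm (case_prod f (x, y))) \<le> norm (c * ((norm x)\<^sup>2 * \<rho> x) + c * R\<^sup>2 * \<rho> x)"
          unfolding eq bnd using nn p(2)[of x] c by simp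
      qed
    qed
  qed
  have "(LINT y|lborel. (LINT x|lborel. f x y)) = (LINT x|lborel. (LINT y|lborel. f x y))"
    using lborel_pair.Fubini_integral[OF fI] .
  moreover have "(LINT x|lborel. f x y) = g y * conv K \<rho> y" for y
  proof -
    have "f x y = g y * (K (y - x) * \<rho> x)" for x
      unfolding f_def using Ks[of "y - x"] by (simp add: algebra_simps)
    then show ?thesis unfolding conv_def by simp
  qed
  moreover have "(LINT y|lborel. f x y) = \<rho> x * conv K g x" for x
    unfolding f_def conv_def by simp
  ultimately show "(LINT x|lborel. \<rho> x * conv K g x) = (LINT y|lborel. g y * conv K \<rho> y)" by simp
qed

lemma bnd_cont:
  fixes f :: "'b::metric_space \<Rightarrow> real"
  assumes "continuous_on Q f" "compact Q"
  obtains c where "\<And>p. p \<in> Q \<Longrightarrow> \<bar>f p\<bar> \<le> c"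
proof -
  have "compact (f ` Q)" using compact_continuous_image assms by blast
  then have "bounded (f ` Q)" by (rule compact_imp_bounded)
  then obtain c where "\<forall>y\<in>f ` Q. norm y \<le> c" unfolding bounded_iff by blast
  then show ?thesis using that by auto
qed

lemma cball_fin: "emeasure lborel (cball (0::'a::euclidean_space) R) < top"
  using emeasure_bounded_finite[OF bounded_cball] by simp

lemma int_bounded_support:
  fixes f :: "'a::euclidean_space \<Rightarrow> real"
  assumes fm: "f \<in> borel_measurable lborel" and fb: "\<And>x. \<bar>f x\<bar> \<le> c" and fs: "\<And>x. f x \<noteq> 0 \<Longrightarrow> norm x \<le> R"
  shows "integrable lborel f"
proof (rule Bochner_Integration.integrable_bound[where f="\<lambda>x. c * indicator (cball 0 R) x"])
  show "integrable lborel (\<lambda>x. c * indicator (cball 0 R) x)"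
    by (intro integrable_mult_right integrable_real_indicator) (auto simp: cball_fin)
  show "f \<in> borel_measurable lborel" by (rule fm)
  have c: "0 \<le> c" using fb[of 0] by simp
  show "AE x in lborel. norm (f x) \<le> norm (c * indicator (cball 0 R) x)"
  proof (intro AE_I2)
    fix x show "norm (f x) \<le> norm (c * indicator (cball 0 R) x)"
      using fb[of x] fs[of x] c by (cases "f x = 0") (auto simp: indicator_def)
  qed
qed

definition efun :: "(real \<Rightarrow> real) \<Rightarrow> (real \<Rightarrow> real) \<Rightarrow> (real \<times> real \<Rightarrow> real) \<Rightarrow>
    ('a::euclidean_space \<Rightarrow> real) \<Rightarrow> real \<Rightarrow> ('a \<Rightarrow> real) \<Rightarrow> ('a \<Rightarrow> real) \<Rightarrow> 'a \<Rightarrow> real" where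
  "efun F1 F2 h K \<epsilon> \<rho>1 \<rho>2 x = F1 (\<rho>1 x) + F2 (\<rho>2 x) + \<epsilon> * h (\<rho>1 x, \<rho>2 x) + \<rho>1 x * conv K \<rho>2 x"

lemma energy_efun: "energy F1 F2 h K \<epsilon> \<rho>1 \<rho>2 =
   (if integrable lborel (efun F1 F2 h K \<epsilon> \<rho>1 \<rho>2) then ereal (integral\<^sup>L lborel (efun F1 F2 h K \<epsilon> \<rho>1 \<rho>2)) else \<infinity>)"
  unfolding energy_def efun_def[abs_def] Let_def by simp

lemma energy_compare:
  assumes le: "energy F1 F2 h K \<epsilon> \<rho>1 \<rho>2 \<le> energy F1 F2 h K \<epsilon> \<sigma>1 \<sigma>2"
    and fI: "integrable lborel (efun F1 F2 h K \<epsilon> \<rho>1 \<rho>2)"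
    and eq: "\<And>x. efun F1 F2 h K \<epsilon> \<sigma>1 \<sigma>2 x = efun F1 F2 h K \<epsilon> \<rho>1 \<rho>2 x + \<Delta> x"
    and \<Delta>I: "integrable lborel \<Delta>"
  shows "0 \<le> integral\<^sup>L lborel \<Delta>"
proof -
  have e: "efun F1 F2 h K \<epsilon> \<sigma>1 \<sigma>2 = (\<lambda>x. efun F1 F2 h K \<epsilon> \<rho>1 \<rho>2 x + \<Delta> x)" using eq by auto
  have I2: "integrable lborel (efun F1 F2 h K \<epsilon> \<sigma>1 \<sigma>2)" unfolding e using fI \<Delta>I by simp
  have "ereal (integral\<^sup>L lborel (efun F1 F2 h K \<epsilon> \<rho>1 \<rho>2)) \<le> ereal (integral\<^sup>L lborel (efun F1 F2 h K \<epsilon> \<sigma>1 \<sigma>2))"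
    using le fI I2 unfolding energy_efun by simp
  also have "integral\<^sup>L lborel (efun F1 F2 h K \<epsilon> \<sigma>1 \<sigma>2) = integral\<^sup>L lborel (efun F1 F2 h K \<epsilon> \<rho>1 \<rho>2) + integral\<^sup>L lborel \<Delta>"
    unfolding e using fI \<Delta>I by simp
  finally show ?thesis by simp
qed

lemma energy_finite_int:
  assumes "energy F1 F2 h K \<epsilon> \<rho>1 \<rho>2 \<le> energy F1 F2 h K \<epsilon> \<sigma>1 \<sigma>2"
    and "energy F1 F2 h K \<epsilon> \<sigma>1 \<sigma>2 < \<infinity>"
  shows "integrable lborel (efun F1 F2 h K \<epsilon> \<rho>1 \<rho>2)"
  using assms unfolding energy_efun by (auto split: if_splits)

lemma test_pair:
  fixes K :: "'a::euclidean_space \<Rightarrow> real"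
  assumes Kc: "continuous_on UNIV K" and Kn: "\<And>z. 0 \<le> K z" and Ku: "\<And>z. K z \<le> CK / 2 * (norm z)\<^sup>2"
    and Kl: "\<And>z. lam / 2 * (norm z)\<^sup>2 \<le> K z" and lam: "lam > 0" and Kcv: "convex_on UNIV K" and CK: "0 \<le> CK"
    and F10: "F1 0 = 0" and F20: "F2 0 = 0" and h0: "h (0, 0) = 0"
  obtains \<sigma> :: "'a \<Rightarrow> real" where "P2dens \<sigma>" "energy F1 F2 h K \<epsilon> \<sigma> \<sigma> < \<infinity>"
proof -
  define B where "B = cbox (0::'a) One"
  define \<sigma> where "\<sigma> x = (indicator B x :: real)" for x
  have Bs[measurable]: "B \<in> sets lborel" unfolding B_def by simp
  have Bfin: "emeasure lborel B < top" unfolding B_def using emeasure_bounded_finite[OF bounded_cbox] by simp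
  have Bm: "measure lborel B = 1" unfolding B_def by (simp add: measure_lborel_cbox_eq)
  obtain R where R: "\<And>x. x \<in> B \<Longrightarrow> norm x \<le> R"
    using bounded_cbox[of "0::'a" One] unfolding B_def bounded_iff by blast
  have \<sigma>m[measurable]: "\<sigma> \<in> borel_measurable lborel" unfolding \<sigma>_def by measurable
  have P: "P2dens \<sigma>" unfolding P2dens_def
  proof (intro conjI allI)
    show "\<sigma> \<in> borel_measurable lborel" by (rule \<sigma>m)
    show "0 \<le> \<sigma> x" for x unfolding \<sigma>_def by simp
    show "integrable lborel \<sigma>" unfolding \<sigma>_def using Bs Bfin by simp
    show "integral\<^sup>L lborel \<sigma> = 1" unfolding \<sigma>_def using Bm by simp
    show "integrable lborel (\<lambda>x. (norm x)\<^sup>2 * \<sigma> x)"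
    proof (rule int_bounded_support[where c="R\<^sup>2" and R=R])
      show "(\<lambda>x. (norm x)\<^sup>2 * \<sigma> x) \<in> borel_measurable lborel" by measurable
      fix x
      show "\<bar>(norm x)\<^sup>2 * \<sigma> x\<bar> \<le> R\<^sup>2" using R[of x] unfolding \<sigma>_def
        by (cases "x \<in> B") (auto intro: power_mono)
      show "(norm x)\<^sup>2 * \<sigma> x \<noteq> 0 \<Longrightarrow> norm x \<le> R" using R[of x] unfolding \<sigma>_def
        by (cases "x \<in> B") auto
    qed
  qed
  note cp = conv_props[OF Kc Kn Ku Kl lam Kcv P CK]
  have "compact B" unfolding B_def by simp
  then obtain cV where cV: "\<And>x. x \<in> B \<Longrightarrow> \<bar>conv K \<sigma> x\<bar> \<le> cV"
    using bnd_cont[OF continuous_on_subset[OF cp(2)]] by blast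
  have "(0::'a) \<in> B" unfolding B_def by (auto simp: mem_box)
  then have cV0: "0 \<le> cV" using cV[of 0] by linarith
  define c0 where "c0 = F1 1 + F2 1 + \<epsilon> * h (1, 1)"
  have eq: "efun F1 F2 h K \<epsilon> \<sigma> \<sigma> x = indicator B x * (c0 + conv K \<sigma> x)" for x
    unfolding efun_def \<sigma>_def c0_def by (cases "x \<in> B") (simp_all add: F10 F20 h0)
  have cm[measurable]: "conv K \<sigma> \<in> borel_measurable lborel"
    using borel_measurable_continuous_on[OF cp(2), of "\<lambda>x. x"] by simp
  have "integrable lborel (\<lambda>x. indicator B x * (c0 + conv K \<sigma> x))"
  proof (rule int_bounded_support[where c="\<bar>c0\<bar> + cV" and R=R])
    show "(\<lambda>x. indicator B x * (c0 + conv K \<sigma> x)) \<in> borel_measurable lborel" by measurable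
    fix x
    show "\<bar>indicator B x * (c0 + conv K \<sigma> x)\<bar> \<le> \<bar>c0\<bar> + cV"
      using cV[of x] cV0 by (cases "x \<in> B") auto
    show "indicator B x * (c0 + conv K \<sigma> x) \<noteq> 0 \<Longrightarrow> norm x \<le> R"
      using R[of x] by (cases "x \<in> B") auto
  qed
  moreover have "efun F1 F2 h K \<epsilon> \<sigma> \<sigma> = (\<lambda>x. indicator B x * (c0 + conv K \<sigma> x))" using eq by (rule ext)
  ultimately have "integrable lborel (efun F1 F2 h K \<epsilon> \<sigma> \<sigma>)" by simp
  then have "energy F1 F2 h K \<epsilon> \<sigma> \<sigma> < \<infinity>" unfolding energy_efun by simp
  then show ?thesis using that P by blast
qed

lemma h_parts:
  assumes hh: "h_hyp h h1 h2 h11 h12 h21 h22"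
  shows "continuous_on quadrant h" "continuous_on quadrant h1" "continuous_on quadrant h2"
    "\<And>r s. 0 \<le> r \<Longrightarrow> 0 \<le> s \<Longrightarrow> ((\<lambda>r. h (r, s)) has_real_derivative h1 (r, s)) (at r within {0..})"
    "\<And>r s. 0 \<le> r \<Longrightarrow> 0 \<le> s \<Longrightarrow> ((\<lambda>r. h (s, r)) has_real_derivative h2 (s, r)) (at r within {0..})"
    "\<And>s. 0 \<le> s \<Longrightarrow> h (0, s) = 0" "\<And>s. 0 \<le> s \<Longrightarrow> h (s, 0) = 0"
    "\<And>s. 0 \<le> s \<Longrightarrow> h1 (0, s) = 0" "\<And>s. 0 \<le> s \<Longrightarrow> h2 (s, 0) = 0"
proof -
  have d: "\<And>r. r \<in> quadrant \<Longrightarrow> (h has_derivative (\<lambda>(a,b). h1 r * a + h2 r * b)) (at r within quadrant)"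
    and d1: "\<And>r. r \<in> quadrant \<Longrightarrow> (h1 has_derivative (\<lambda>(a,b). h11 r * a + h12 r * b)) (at r within quadrant)"
    and d2: "\<And>r. r \<in> quadrant \<Longrightarrow> (h2 has_derivative (\<lambda>(a,b). h21 r * a + h22 r * b)) (at r within quadrant)"
    and ax: "\<And>r. r \<in> quadrant \<Longrightarrow> (fst r = 0 \<or> snd r = 0) \<Longrightarrow> h r = 0 \<and> h1 r = 0 \<and> h2 r = 0"
    using hh unfolding h_hyp_def by auto
  show "continuous_on quadrant h" by (rule has_derivative_continuous_on[OF d])
  show "continuous_on quadrant h1" by (rule has_derivative_continuous_on[OF d1])
  show "continuous_on quadrant h2" by (rule has_derivative_continuous_on[OF d2])
  show "h (0, s) = 0" "h1 (0, s) = 0" if "0 \<le> s" for s using ax[of "(0, s)"] that by (auto simp: quadrant_def)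
  show "h (s, 0) = 0" "h2 (s, 0) = 0" if "0 \<le> s" for s using ax[of "(s, 0)"] that by (auto simp: quadrant_def)
  show "((\<lambda>r. h (r, s)) has_real_derivative h1 (r, s)) (at r within {0..})" if "0 \<le> r" "0 \<le> s" for r s
  proof -
    have dd: "((\<lambda>r. (r, s)) has_derivative (\<lambda>t. (t, 0))) (at r within {0..})"
      by (auto intro!: derivative_eq_intros)
    have df: "((\<lambda>r. h (r, s)) has_derivative (\<lambda>y. (\<lambda>(a,b). h1 (r, s) * a + h2 (r, s) * b) (y, 0))) (at r within {0..})"
      by (rule has_derivative_in_compose2[OF d _ _ dd]) (use that in \<open>auto simp: quadrant_def\<close>)
    from df show ?thesis unfolding has_field_derivative_def
      by (rule has_derivative_eq_rhs) (auto simp: fun_eq_iff)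
  qed
  show "((\<lambda>r. h (s, r)) has_real_derivative h2 (s, r)) (at r within {0..})" if "0 \<le> r" "0 \<le> s" for r s
  proof -
    have dd: "((\<lambda>r. (s, r)) has_derivative (\<lambda>t. (0, t))) (at r within {0..})"
      by (auto intro!: derivative_eq_intros)
    have df: "((\<lambda>r. h (s, r)) has_derivative (\<lambda>y. (\<lambda>(a,b). h1 (s, r) * a + h2 (s, r) * b) (0, y))) (at r within {0..})"
      by (rule has_derivative_in_compose2[OF d _ _ dd]) (use that in \<open>auto simp: quadrant_def\<close>)
    from df show ?thesis unfolding has_field_derivative_def
      by (rule has_derivative_eq_rhs) (auto simp: fun_eq_iff)
  qed
qed

lemma convex_restrict1:
  assumes cv: "convex_on quadrant f" and s: "0 \<le> s"
  shows "convex_on {0..} (\<lambda>r. f (r, s))"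
proof (rule convex_onI)
  fix t x y :: real assume t: "0 < t" "t < 1" and x: "x \<in> {0..}" and y: "y \<in> {0..}"
  have "f ((1 - t) *\<^sub>R (x, s) + t *\<^sub>R (y, s)) \<le> (1 - t) * f (x, s) + t * f (y, s)"
    using t x y s by (intro convex_onD[OF cv]) (auto simp: quadrant_def)
  moreover have "(1 - t) *\<^sub>R (x, s) + t *\<^sub>R (y, s) = ((1 - t) *\<^sub>R x + t *\<^sub>R y, s)"
    by (simp add: algebra_simps)
  ultimately show "f ((1 - t) *\<^sub>R x + t *\<^sub>R y, s) \<le> (1 - t) * f (x, s) + t * f (y, s)" by simp
qed simp

lemma convex_restrict2:
  assumes cv: "convex_on quadrant f" and s: "0 \<le> s"
  shows "convex_on {0..} (\<lambda>r. f (s, r))"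
proof (rule convex_onI)
  fix t x y :: real assume t: "0 < t" "t < 1" and x: "x \<in> {0..}" and y: "y \<in> {0..}"
  have "f ((1 - t) *\<^sub>R (s, x) + t *\<^sub>R (s, y)) \<le> (1 - t) * f (s, x) + t * f (s, y)"
    using t x y s by (intro convex_onD[OF cv]) (auto simp: quadrant_def)
  moreover have "(1 - t) *\<^sub>R (s, x) + t *\<^sub>R (s, y) = (s, (1 - t) *\<^sub>R x + t *\<^sub>R y)"
    by (simp add: algebra_simps)
  ultimately show "f (s, (1 - t) *\<^sub>R x + t *\<^sub>R y) \<le> (1 - t) * f (s, x) + t * f (s, y)" by simp
qed simp

lemma convex_on_minus_const:
  fixes g :: "'b::real_vector \<Rightarrow> real"
  assumes "convex_on S (\<lambda>r. g r + c)"
  shows "convex_on S g"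
proof (rule convex_onI)
  fix t :: real and x y assume t: "0 < t" "t < 1" and xy: "x \<in> S" "y \<in> S"
  from convex_onD[OF assms, of t x y] have "g ((1 - t) *\<^sub>R x + t *\<^sub>R y) + c \<le> (1 - t) * (g x + c) + t * (g y + c)"
    using t xy by simp
  then show "g ((1 - t) *\<^sub>R x + t *\<^sub>R y) \<le> (1 - t) * g x + t * g y" by (simp add: algebra_simps)
next
  show "convex S" using assms by (simp add: convex_on_def)
qed

lemma final_ae:
  fixes D :: "real \<Rightarrow> real \<Rightarrow> real"
  assumes low: "AE x in M. C \<le> D (\<rho> x) (q x) + W x" and up: "AE x in M. 0 < \<rho> x \<longrightarrow> D (\<rho> x) (q x) + W x \<le> C"
    and n1: "\<And>x. 0 \<le> \<rho> x" and n2: "\<And>x. 0 \<le> q x" and D0: "\<And>s. 0 \<le> s \<Longrightarrow> D 0 s = 0"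
    and Dpos: "\<And>r s. 0 < r \<Longrightarrow> 0 \<le> s \<Longrightarrow> 0 < D r s"
  shows "AE x in M. D (\<rho> x) (q x) = max (C - W x) 0" "AE x in M. (0 < \<rho> x \<longleftrightarrow> W x < C)"
proof -
  have *: "D (\<rho> x) (q x) = max (C - W x) 0 \<and> (0 < \<rho> x \<longleftrightarrow> W x < C)"
    if l: "C \<le> D (\<rho> x) (q x) + W x" and u: "0 < \<rho> x \<longrightarrow> D (\<rho> x) (q x) + W x \<le> C" for x
  proof (cases "\<rho> x = 0")
    case True
    then have "D (\<rho> x) (q x) = 0" using D0 n2 by simp
    then show ?thesis using l True by auto
  next
    case False
    then have r: "0 < \<rho> x" using n1[of x] by simp
    then have "0 < D (\<rho> x) (q x)" using Dpos n2 by simp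
    then show ?thesis using l u r by auto
  qed
  show "AE x in M. D (\<rho> x) (q x) = max (C - W x) 0" using low up by eventually_elim (use * in blast)
  show "AE x in M. (0 < \<rho> x \<longleftrightarrow> W x < C)" using low up by eventually_elim (use * in blast)
qed

lemma pert_int:
  fixes Gf :: "real \<Rightarrow> real \<Rightarrow> real" and \<rho> q W g :: "'a::euclidean_space \<Rightarrow> real"
  assumes Gc: "continuous_on quadrant (\<lambda>p. Gf (fst p) (snd p))"
    and \<rho>m: "\<rho> \<in> borel_measurable lborel" and qm: "q \<in> borel_measurable lborel" and gm: "g \<in> borel_measurable lborel"
    and \<rho>n: "\<And>x. 0 \<le> \<rho> x" and qn: "\<And>x. 0 \<le> q x" and Wc: "continuous_on UNIV W"
    and gb: "\<And>x. \<bar>g x\<bar> \<le> M" and gs: "\<And>x. g x \<noteq> 0 \<Longrightarrow> \<rho> x \<le> M \<and> q x \<le> M \<and> norm x \<le> M"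
    and gp: "\<And>x. 0 \<le> \<rho> x + g x"
  shows "integrable lborel (\<lambda>x. Gf (\<rho> x + g x) (q x) - Gf (\<rho> x) (q x) + g x * W x)"
proof -
  have [measurable]: "\<rho> \<in> borel_measurable lborel" "q \<in> borel_measurable lborel" "g \<in> borel_measurable lborel"
    using \<rho>m qm gm by auto
  have [measurable]: "W \<in> borel_measurable lborel" using borel_measurable_continuous_on[OF Wc, of "\<lambda>x. x"] by simp
  have [measurable]: "(\<lambda>x. Gf (\<rho> x + g x) (q x)) \<in> borel_measurable lborel"
    by (rule D_measurable[OF Gc _ qm gp qn]) measurable
  have [measurable]: "(\<lambda>x. Gf (\<rho> x) (q x)) \<in> borel_measurable lborel"
    by (rule D_measurable[OF Gc \<rho>m qm \<rho>n qn])
  have M: "0 \<le> M" using gb[of 0] by simp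
  define Q where "Q = {0..M+M} \<times> {0..M}"
  have "compact Q" unfolding Q_def by (intro compact_Times compact_Icc)
  moreover have "continuous_on Q (\<lambda>p. Gf (fst p) (snd p))"
    by (rule continuous_on_subset[OF Gc]) (auto simp: Q_def quadrant_def)
  ultimately obtain cG where cG: "\<And>p. p \<in> Q \<Longrightarrow> \<bar>Gf (fst p) (snd p)\<bar> \<le> cG"
    using bnd_cont by blast
  obtain cV where cV: "\<And>x. x \<in> cball 0 M \<Longrightarrow> \<bar>W x\<bar> \<le> cV"
    using bnd_cont[OF continuous_on_subset[OF Wc] compact_cball] by blast
  have "(0, 0) \<in> Q" unfolding Q_def using M by auto
  then have cG0: "0 \<le> cG" using cG[of "(0,0)"] by linarith
  have "(0::'a) \<in> cball 0 M" using M by simp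
  then have cV0: "0 \<le> cV" using cV[of 0] by linarith
  show ?thesis
  proof (rule int_bounded_support[where c="cG + cG + M * cV" and R=M])
  show "(\<lambda>x. Gf (\<rho> x + g x) (q x) - Gf (\<rho> x) (q x) + g x * W x) \<in> borel_measurable lborel" by measurable
  fix x
  show "\<bar>Gf (\<rho> x + g x) (q x) - Gf (\<rho> x) (q x) + g x * W x\<bar> \<le> cG + cG + M * cV"
  proof (cases "g x = 0")
    case True then show ?thesis using cG0 cV0 M by simp
  next
    case False
    then have b: "\<rho> x \<le> M" "q x \<le> M" "norm x \<le> M" using gs by auto
    have "(\<rho> x + g x, q x) \<in> Q" "(\<rho> x, q x) \<in> Q" unfolding Q_def using b gb[of x] gp[of x] \<rho>n[of x] qn[of x] by auto
    then have "\<bar>Gf (\<rho> x + g x) (q x)\<bar> \<le> cG" "\<bar>Gf (\<rho> x) (q x)\<bar> \<le> cG" using cG by force+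
    moreover have "\<bar>g x * W x\<bar> \<le> M * cV" using gb[of x] cV[of x] b(3) by (simp add: abs_mult mult_mono)
    ultimately show ?thesis by linarith
  qed
  show "Gf (\<rho> x + g x) (q x) - Gf (\<rho> x) (q x) + g x * W x \<noteq> 0 \<Longrightarrow> norm x \<le> M"
    using gs[of x] by (cases "g x = 0") auto
  qed
qed

theorem theorem3p8:
  fixes K :: "'a::euclidean_space \<Rightarrow> real"
    and F1 F1' F1'' F2 F2' F2'' :: "real \<Rightarrow> real"
    and h h1 h2 h11 h12 h21 h22 :: "real \<times> real \<Rightarrow> real"
    and \<epsilon>0 \<epsilon> :: real
    and \<rho>1 \<rho>2 :: "'a \<Rightarrow> real"
  assumes hK: "K_hyp K"
    and hF1: "F_hyp F1 F1' F1''" and hF2: "F_hyp F2 F2' F2''"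
    and hh: "h_hyp h h1 h2 h11 h12 h21 h22"
    and ht11: "theta_hyp h11 F1'' fst fst F1' F2'"
    and ht12: "theta_hyp h12 F2'' snd fst F1' F2'"
    and ht21: "theta_hyp h21 F1'' fst snd F1' F2'"
    and ht22: "theta_hyp h22 F2'' snd snd F1' F2'"
    and he0: "\<epsilon>0 > 0"
    and hconv: "convex_on quadrant (\<lambda>r. F1 (fst r) + F2 (snd r) + 2 * \<epsilon>0 * h r)"
    and heps: "0 < \<epsilon>" "\<epsilon> \<le> \<epsilon>0"
    and hX0: "X0 \<rho>1 \<rho>2"
    and hmin: "\<And>\<sigma>1 \<sigma>2. P2dens \<sigma>1 \<Longrightarrow> P2dens \<sigma>2 \<Longrightarrow>
                 energy F1 F2 h K \<epsilon> \<rho>1 \<rho>2 \<le> energy F1 F2 h K \<epsilon> \<sigma>1 \<sigma>2"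
  shows "\<exists>C1 C2. C1 > 0 \<and> C2 > 0 \<and>
     (AE x in lborel. F1' (\<rho>1 x) + \<epsilon> * h1 (\<rho>1 x, \<rho>2 x) = max (C1 - conv K \<rho>2 x) 0) \<and>
     (AE x in lborel. F2' (\<rho>2 x) + \<epsilon> * h2 (\<rho>1 x, \<rho>2 x) = max (C2 - conv K \<rho>1 x) 0) \<and>
     dsupp \<rho>1 = {x. conv K \<rho>2 x \<le> C1} \<and> dsupp \<rho>2 = {x. conv K \<rho>1 x \<le> C2} \<and>
     compact (dsupp \<rho>1) \<and> convex (dsupp \<rho>1) \<and>
     compact (dsupp \<rho>2) \<and> convex (dsupp \<rho>2)"
proof -
  obtain lam CK where lam: "lam > 0" and CK: "CK \<ge> 0" and Kcv: "convex_on UNIV K" and Ks: "\<And>z. K (-z) = K z"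
    and Kn: "\<And>z. 0 \<le> K z" and Kl: "\<And>z. lam / 2 * (norm z)\<^sup>2 \<le> K z" and Ku: "\<And>z. K z \<le> CK / 2 * (norm z)\<^sup>2"
    and Kc: "continuous_on UNIV K"
    by (rule K_props[OF hK]) blast
  note F1p = F_parts[OF hF1] and F2p = F_parts[OF hF2] and hp = h_parts[OF hh]
  have P1: "P2dens \<rho>1" and P2: "P2dens \<rho>2" using hX0 unfolding X0_def by auto
  note p1 = P2dens_parts[OF P1] and p2 = P2dens_parts[OF P2]
  note cp1 = conv_props[OF Kc Kn Ku Kl lam Kcv P1 CK] and cp2 = conv_props[OF Kc Kn Ku Kl lam Kcv P2 CK]
  have h00: "h (0, 0) = 0" using hp(6)[of 0] by simp
  obtain \<sigma>0 :: "'a \<Rightarrow> real" where \<sigma>0: "P2dens \<sigma>0" "energy F1 F2 h K \<epsilon> \<sigma>0 \<sigma>0 < \<infinity>"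
    by (rule test_pair[where ?F1.0=F1 and ?F2.0=F2 and h=h and \<epsilon>=\<epsilon>, OF Kc Kn Ku Kl lam Kcv CK F1p(4) F2p(4) h00])
  have fI: "integrable lborel (efun F1 F2 h K \<epsilon> \<rho>1 \<rho>2)"
    by (rule energy_finite_int[OF hmin[OF \<sigma>0(1) \<sigma>0(1)] \<sigma>0(2)])
  have F1c: "continuous_on {0..} F1" by (rule deriv_cont_on[OF F1p(1)])
  have F2c: "continuous_on {0..} F2" by (rule deriv_cont_on[OF F2p(1)])
  have cvx1: "convex_on {0..} (\<lambda>r. F1 r + 2 * \<epsilon>0 * h (r, s))" if s: "0 \<le> s" for s
  proof (rule convex_on_minus_const[where c="F2 s"])
    show "convex_on {0..} (\<lambda>r. F1 r + 2 * \<epsilon>0 * h (r, s) + F2 s)"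
      using convex_restrict1[OF hconv s] by (simp add: algebra_simps)
  qed
  have cvx2: "convex_on {0..} (\<lambda>r. F2 r + 2 * \<epsilon>0 * h (s, r))" if s: "0 \<le> s" for s
  proof (rule convex_on_minus_const[where c="F1 s"])
    show "convex_on {0..} (\<lambda>r. F2 r + 2 * \<epsilon>0 * h (s, r) + F1 s)"
      using convex_restrict2[OF hconv s] by (simp add: algebra_simps)
  qed
  have dH1: "((\<lambda>r. h (r, s)) has_real_derivative h1 (r, s)) (at r within {0..})" if "0 \<le> r" "0 \<le> s" for r s
    using hp(4) that by blast
  have h10: "h1 (0, s) = 0" if "0 \<le> s" for s using hp(8) that by blast
  have DP1: "continuous_on quadrant (\<lambda>p. F1' (fst p) + \<epsilon> * h1 p)"
    "\<And>s. 0 \<le> s \<Longrightarrow> F1' 0 + \<epsilon> * h1 (0, s) = 0"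
    "\<And>r r' s. 0 \<le> r \<Longrightarrow> r < r' \<Longrightarrow> 0 \<le> s \<Longrightarrow> F1' r + \<epsilon> * h1 (r, s) < F1' r' + \<epsilon> * h1 (r', s)"
    "\<And>r r' s. 0 \<le> r \<Longrightarrow> 0 \<le> r' \<Longrightarrow> 0 \<le> s \<Longrightarrow>
        (F1 r' + \<epsilon> * h (r', s)) - (F1 r + \<epsilon> * h (r, s)) \<le> (F1' r' + \<epsilon> * h1 (r', s)) * (r' - r)"
    using D_props[where H=h and Ha=h1, OF hF1 _ hp(2) _ _ heps] dH1 h10 cvx1 by simp_all
  have h2sw: "continuous_on quadrant (\<lambda>p. h2 (snd p, fst p))"
    by (rule continuous_on_compose2[OF hp(3)]) (auto intro!: continuous_intros simp: quadrant_def)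
  have dH2: "((\<lambda>r. h (s, r)) has_real_derivative h2 (s, r)) (at r within {0..})" if "0 \<le> r" "0 \<le> s" for r s
    using hp(5) that by blast
  have DP2: "continuous_on quadrant (\<lambda>p. F2' (fst p) + \<epsilon> * h2 (snd p, fst p))"
    "\<And>s. 0 \<le> s \<Longrightarrow> F2' 0 + \<epsilon> * h2 (s, 0) = 0"
    "\<And>r r' s. 0 \<le> r \<Longrightarrow> r < r' \<Longrightarrow> 0 \<le> s \<Longrightarrow> F2' r + \<epsilon> * h2 (s, r) < F2' r' + \<epsilon> * h2 (s, r')"
    "\<And>r r' s. 0 \<le> r \<Longrightarrow> 0 \<le> r' \<Longrightarrow> 0 \<le> s \<Longrightarrow>
        (F2 r' + \<epsilon> * h (s, r')) - (F2 r + \<epsilon> * h (s, r)) \<le> (F2' r' + \<epsilon> * h2 (s, r')) * (r' - r)"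
    using D_props[where H="\<lambda>p. h (snd p, fst p)" and Ha="\<lambda>p. h2 (snd p, fst p)", OF hF2 _ h2sw _ _ heps]
      dH2 hp(9) cvx2 by simp_all
  have V1c: "continuous_on UNIV (conv K \<rho>1)" and V2c: "continuous_on UNIV (conv K \<rho>2)" using cp1(2) cp2(2) .
  have V1m[measurable]: "conv K \<rho>1 \<in> borel_measurable lborel"
    using borel_measurable_continuous_on[OF V1c, of "\<lambda>x. x"] by simp
  have V2m[measurable]: "conv K \<rho>2 \<in> borel_measurable lborel"
    using borel_measurable_continuous_on[OF V2c, of "\<lambda>x. x"] by simp
  have [measurable]: "\<rho>1 \<in> borel_measurable lborel" "\<rho>2 \<in> borel_measurable lborel" using p1(1) p2(1) by auto
  have G1c: "continuous_on quadrant (\<lambda>p. F1 (fst p) + \<epsilon> * h (fst p, snd p))"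
  proof -
    have "continuous_on quadrant (\<lambda>p. F1 (fst p))"
      by (rule continuous_on_compose2[OF F1c continuous_on_fst[OF continuous_on_id]]) (auto simp: quadrant_def)
    then show ?thesis using hp(1) by (auto intro!: continuous_intros)
  qed
  have G2c: "continuous_on quadrant (\<lambda>p. F2 (fst p) + \<epsilon> * h (snd p, fst p))"
  proof -
    have "continuous_on quadrant (\<lambda>p. F2 (fst p))"
      by (rule continuous_on_compose2[OF F2c continuous_on_fst[OF continuous_on_id]]) (auto simp: quadrant_def)
    moreover have "continuous_on quadrant (\<lambda>p. h (snd p, fst p))"
      by (rule continuous_on_compose2[OF hp(1)]) (auto intro!: continuous_intros simp: quadrant_def)
    ultimately show ?thesis by (auto intro!: continuous_intros)
  qed
  have pert_P2: "P2dens (\<lambda>x. \<rho> x + g x)"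
    if P: "P2dens \<rho>" and gm: "g \<in> borel_measurable lborel" and gb: "\<And>x. \<bar>g x\<bar> \<le> M"
      and gs: "\<And>x. g x \<noteq> 0 \<Longrightarrow> norm x \<le> M" and gp: "\<And>x. 0 \<le> \<rho> x + g x"
      and gI: "integrable lborel g" and g0: "integral\<^sup>L lborel g = 0" for \<rho> g :: "'a \<Rightarrow> real" and M
  proof -
    note pp = P2dens_parts[OF P]
    have "integrable lborel (\<lambda>x. (norm x)\<^sup>2 * g x)"
    proof (rule int_bounded_support[where c="M\<^sup>2 * M" and R=M])
      show "(\<lambda>x. (norm x)\<^sup>2 * g x) \<in> borel_measurable lborel" using gm by measurable
      fix x
      show "\<bar>(norm x)\<^sup>2 * g x\<bar> \<le> M\<^sup>2 * M"
      proof (cases "g x = 0")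
        case True then show ?thesis using gb[of x] by simp
      next
        case False
        then have "norm x \<le> M" using gs by blast
        then have "(norm x)\<^sup>2 \<le> M\<^sup>2" by (simp add: power_mono)
        then show ?thesis using gb[of x] by (simp add: abs_mult mult_mono)
      qed
      show "(norm x)\<^sup>2 * g x \<noteq> 0 \<Longrightarrow> norm x \<le> M" using gs by auto
    qed
    then have "integrable lborel (\<lambda>x. (norm x)\<^sup>2 * \<rho> x + (norm x)\<^sup>2 * g x)" using pp(5) by simp
    then have m2: "integrable lborel (\<lambda>x. (norm x)\<^sup>2 * (\<rho> x + g x))" by (simp add: algebra_simps)
    show ?thesis unfolding P2dens_def using pp gm gp gI g0 m2 by auto
  qed
  have var1: "integrable lborel (\<lambda>x. F1 (\<rho>1 x + g x) + \<epsilon> * h (\<rho>1 x + g x, \<rho>2 x) - (F1 (\<rho>1 x) + \<epsilon> * h (\<rho>1 x, \<rho>2 x)) + g x * conv K \<rho>2 x) \<and>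
      0 \<le> (LINT x|lborel. F1 (\<rho>1 x + g x) + \<epsilon> * h (\<rho>1 x + g x, \<rho>2 x) - (F1 (\<rho>1 x) + \<epsilon> * h (\<rho>1 x, \<rho>2 x)) + g x * conv K \<rho>2 x)"
    if gm: "g \<in> borel_measurable lborel" and gb: "\<And>x. \<bar>g x\<bar> \<le> M"
      and gs: "\<And>x. g x \<noteq> 0 \<Longrightarrow> \<rho>1 x \<le> M \<and> \<rho>2 x \<le> M \<and> norm x \<le> M" and gp: "\<And>x. 0 \<le> \<rho>1 x + g x"
      and gI: "integrable lborel g" and g0: "integral\<^sup>L lborel g = 0" for g M
  proof -
    have gsn': "\<And>x. g x \<noteq> 0 \<Longrightarrow> norm x \<le> M" using gs by blast
    define \<Delta> where "\<Delta> x = F1 (\<rho>1 x + g x) + \<epsilon> * h (\<rho>1 x + g x, \<rho>2 x) - (F1 (\<rho>1 x) + \<epsilon> * h (\<rho>1 x, \<rho>2 x)) + g x * conv K \<rho>2 x" for x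
    have \<Delta>I: "integrable lborel \<Delta>" unfolding \<Delta>_def
      by (rule pert_int[where Gf="\<lambda>r s. F1 r + \<epsilon> * h (r, s)", OF G1c p1(1) p2(1) gm p1(2) p2(2) V2c gb gs gp])
    have P\<sigma>: "P2dens (\<lambda>x. \<rho>1 x + g x)" by (rule pert_P2[OF P1 gm gb gsn' gp gI g0])
    have eq: "efun F1 F2 h K \<epsilon> (\<lambda>x. \<rho>1 x + g x) \<rho>2 x = efun F1 F2 h K \<epsilon> \<rho>1 \<rho>2 x + \<Delta> x" for x
      unfolding efun_def \<Delta>_def by (simp add: algebra_simps)
    have "0 \<le> integral\<^sup>L lborel \<Delta>" by (rule energy_compare[OF hmin[OF P\<sigma> P2] fI eq \<Delta>I])
    then show ?thesis using \<Delta>I unfolding \<Delta>_def by simp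
  qed
  have var2: "integrable lborel (\<lambda>x. F2 (\<rho>2 x + g x) + \<epsilon> * h (\<rho>1 x, \<rho>2 x + g x) - (F2 (\<rho>2 x) + \<epsilon> * h (\<rho>1 x, \<rho>2 x)) + g x * conv K \<rho>1 x) \<and>
      0 \<le> (LINT x|lborel. F2 (\<rho>2 x + g x) + \<epsilon> * h (\<rho>1 x, \<rho>2 x + g x) - (F2 (\<rho>2 x) + \<epsilon> * h (\<rho>1 x, \<rho>2 x)) + g x * conv K \<rho>1 x)"
    if gm: "g \<in> borel_measurable lborel" and gb: "\<And>x. \<bar>g x\<bar> \<le> M"
      and gs: "\<And>x. g x \<noteq> 0 \<Longrightarrow> \<rho>2 x \<le> M \<and> \<rho>1 x \<le> M \<and> norm x \<le> M" and gp: "\<And>x. 0 \<le> \<rho>2 x + g x"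
      and gI: "integrable lborel g" and g0: "integral\<^sup>L lborel g = 0" for g M
  proof -
    have gsn': "\<And>x. g x \<noteq> 0 \<Longrightarrow> norm x \<le> M" using gs by blast
    define \<Delta> where "\<Delta> x = F2 (\<rho>2 x + g x) + \<epsilon> * h (\<rho>1 x, \<rho>2 x + g x) - (F2 (\<rho>2 x) + \<epsilon> * h (\<rho>1 x, \<rho>2 x)) + g x * conv K \<rho>1 x" for x
    define P where "P x = F2 (\<rho>2 x + g x) + \<epsilon> * h (\<rho>1 x, \<rho>2 x + g x) - (F2 (\<rho>2 x) + \<epsilon> * h (\<rho>1 x, \<rho>2 x))" for x
    have \<Delta>I: "integrable lborel \<Delta>" unfolding \<Delta>_def
      by (rule pert_int[where Gf="\<lambda>r s. F2 r + \<epsilon> * h (s, r)", OF G2c p2(1) p1(1) gm p2(2) p1(2) V1c gb gs gp])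
    have PI0: "integrable lborel (\<lambda>x. P x + g x * 0)" unfolding P_def
      by (rule pert_int[where Gf="\<lambda>r s. F2 r + \<epsilon> * h (s, r)", OF G2c p2(1) p1(1) gm p2(2) p1(2) continuous_on_const gb gs gp])
    then have PI: "integrable lborel P" by simp
    have gVI: "integrable lborel (\<lambda>x. g x * conv K \<rho>1 x)"
    proof -
      have "(\<lambda>x. g x * conv K \<rho>1 x) = (\<lambda>x. \<Delta> x - P x)" unfolding \<Delta>_def P_def by (simp add: fun_eq_iff)
      then show ?thesis using \<Delta>I PI by simp
    qed
    have P\<sigma>: "P2dens (\<lambda>x. \<rho>2 x + g x)" by (rule pert_P2[OF P2 gm gb gsn' gp gI g0])
    note fb = fubini_conv[OF Kc Kn Ku CK Ks P1 gm gb gsn']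
    have csplit: "conv K (\<lambda>x. \<rho>2 x + g x) x = conv K \<rho>2 x + conv K g x" for x
    proof -
      have "(\<lambda>y. K (x - y) * (\<rho>2 y + g y)) = (\<lambda>y. K (x - y) * \<rho>2 y + K (x - y) * g y)" by (simp add: fun_eq_iff algebra_simps)
      then show ?thesis unfolding conv_def
        using conv_integrable[OF Kc Kn Ku P2 CK, where x=x] conv_g(1)[OF Kc Kn Ku CK gm gb gsn', where x=x] by simp
    qed
    have eq: "efun F1 F2 h K \<epsilon> \<rho>1 (\<lambda>x. \<rho>2 x + g x) x = efun F1 F2 h K \<epsilon> \<rho>1 \<rho>2 x + (P x + \<rho>1 x * conv K g x)" for x
      unfolding efun_def P_def csplit by (simp add: algebra_simps)
    have "0 \<le> integral\<^sup>L lborel (\<lambda>x. P x + \<rho>1 x * conv K g x)"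
      by (rule energy_compare[OF hmin[OF P1 P\<sigma>] fI eq]) (use PI fb(1) in simp)
    also have "integral\<^sup>L lborel (\<lambda>x. P x + \<rho>1 x * conv K g x) = integral\<^sup>L lborel P + (LINT x|lborel. g x * conv K \<rho>1 x)"
      using PI fb by simp
    also have "\<dots> = integral\<^sup>L lborel \<Delta>"
    proof -
      have "\<Delta> = (\<lambda>x. P x + g x * conv K \<rho>1 x)" unfolding \<Delta>_def P_def by (simp add: fun_eq_iff)
      then show ?thesis using PI gVI by simp
    qed
    finally show ?thesis using \<Delta>I unfolding \<Delta>_def by simp
  qed
  have Dc1: "continuous_on quadrant (\<lambda>r. F1' (fst r) + \<epsilon> * h1 (fst r, snd r))" using DP1(1) by simp
  have Dpos1: "0 < F1' r + \<epsilon> * h1 (r, s)" if "0 < r" "0 \<le> s" for r s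
    using DP1(3)[of 0 r s] DP1(2)[of s] that by simp
  have Dn1: "0 \<le> F1' r + \<epsilon> * h1 (r, s)" if "0 \<le> r" "0 \<le> s" for r s
    using Dpos1[of r s] DP1(2)[of s] that by (cases "r = 0") auto
  have D01: "F1' 0 + \<epsilon> * h1 (0, s) = 0" if "0 \<le> s" for s using DP1(2) that .
  have Dpos2: "0 < F2' r + \<epsilon> * h2 (s, r)" if "0 < r" "0 \<le> s" for r s
    using DP2(3)[of 0 r s] DP2(2)[of s] that by simp
  have Dn2: "0 \<le> F2' r + \<epsilon> * h2 (s, r)" if "0 \<le> r" "0 \<le> s" for r s
    using Dpos2[of r s] DP2(2)[of s] that by (cases "r = 0") auto
  have D02: "F2' 0 + \<epsilon> * h2 (s, 0) = 0" if "0 \<le> s" for s using DP2(2) that .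
  obtain C1 where C1: "AE x in lborel. C1 \<le> F1' (\<rho>1 x) + \<epsilon> * h1 (\<rho>1 x, \<rho>2 x) + conv K \<rho>2 x"
    "AE x in lborel. 0 < \<rho>1 x \<longrightarrow> F1' (\<rho>1 x) + \<epsilon> * h1 (\<rho>1 x, \<rho>2 x) + conv K \<rho>2 x \<le> C1"
  proof -
    have "\<exists>C. (AE x in lborel. C \<le> (\<lambda>r s. F1' r + \<epsilon> * h1 (r, s)) (\<rho>1 x) (\<rho>2 x) + conv K \<rho>2 x) \<and>
        (AE x in lborel. 0 < \<rho>1 x \<longrightarrow> (\<lambda>r s. F1' r + \<epsilon> * h1 (r, s)) (\<rho>1 x) (\<rho>2 x) + conv K \<rho>2 x \<le> C)"
      using p1(1) p1(2) p1(3) p1(4) p2(1) p2(2) V2c cp2(3) Dc1 Dn1 DP1(4) var1 by (rule EL_const[where \<Psi>="\<lambda>r s. F1 r + \<epsilon> * h (r, s)"])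
    then show ?thesis using that by auto
  qed
  obtain C2 where C2: "AE x in lborel. C2 \<le> F2' (\<rho>2 x) + \<epsilon> * h2 (\<rho>1 x, \<rho>2 x) + conv K \<rho>1 x"
    "AE x in lborel. 0 < \<rho>2 x \<longrightarrow> F2' (\<rho>2 x) + \<epsilon> * h2 (\<rho>1 x, \<rho>2 x) + conv K \<rho>1 x \<le> C2"
  proof -
    have "\<exists>C. (AE x in lborel. C \<le> (\<lambda>r s. F2' r + \<epsilon> * h2 (s, r)) (\<rho>2 x) (\<rho>1 x) + conv K \<rho>1 x) \<and>
        (AE x in lborel. 0 < \<rho>2 x \<longrightarrow> (\<lambda>r s. F2' r + \<epsilon> * h2 (s, r)) (\<rho>2 x) (\<rho>1 x) + conv K \<rho>1 x \<le> C)"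
      using p2(1) p2(2) p2(3) p2(4) p1(1) p1(2) V1c cp1(3) DP2(1) Dn2 DP2(4) var2 by (rule EL_const[where \<Psi>="\<lambda>r s. F2 r + \<epsilon> * h (s, r)"])
    then show ?thesis using that by auto
  qed
  note fa1 = final_ae[where D="\<lambda>r s. F1' r + \<epsilon> * h1 (r, s)", OF C1(1) C1(2) p1(2) p2(2) D01 Dpos1]
  note fa2 = final_ae[where D="\<lambda>r s. F2' r + \<epsilon> * h2 (s, r)", OF C2(1) C2(2) p2(2) p1(2) D02 Dpos2]
  note sc1 = supp_char[OF p1(1) p1(2) p1(4) V2c cp2(1) cp2(3) cp2(4) fa1(2)]
  note sc2 = supp_char[OF p2(1) p2(2) p2(4) V1c cp1(1) cp1(3) cp1(4) fa2(2)]
  show ?thesis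
    using sc1 sc2 fa1(1) fa2(1) by blast
qed

end
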